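(* There is an absolute constant $K$ such that for all $\gamma\in(0,1)$ and integers $n\ge p\ge2$, $k\ge1$, $b\ge1$ with $k\le n/b$, the quantity $\mathcal{E}(B_\gamma^{(p)},C_\gamma^{(p)})$ is at most $K$ times $$\begin{cases}\frac{\sqrt k\,p^{1/2-\gamma}}{1/2-\gamma}+\frac1\gamma\sqrt{\frac{nk}{b}}+\sqrt{\frac{kp}{\gamma(1/2-\gamma)b}}+p^{-\gamma}\sqrt{\frac{nk}{1/2-\gamma}}, & 0<\gamma<\tfrac12,\\[4pt] \sqrt k\log p+\sqrt{\frac{nk}{b}}+\sqrt{\frac{kp\log p}{b}}+\sqrt{\frac{nk\log p}{p}}, & \gamma=\tfrac12,\\[4pt] \frac{\sqrt k\,p^{\gamma-1/2}}{(\gamma-1/2)\sqrt{1-\gamma}}+\sqrt{\frac{nk}{b}}+\frac{\sqrt k\,p^\gamma}{(1-\gamma)\sqrt{(\gamma-1/2)b}}+\sqrt{\frac{(1-\gamma)nk}{(\gamma-1/2)p}}, & \tfrac12<\gamma<1.\end{cases}$$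
   Context: $\log$ is the natural logarithm. $E\in\mathbb{R}^{n\times n}$ is the prefix-sum matrix ($E_{ij}=1$ if $i\ge j$, else $0$). $(\tilde c_\gamma)_i:=(-1)^i\binom{\gamma}{i}$ with $\binom{\gamma}{i}=\prod_{j=1}^{i}\frac{\gamma+1-j}{j}$. $(C_\gamma^{(p)})^{-1}$ is the $n\times n$ lower-triangular Toeplitz matrix whose $r$-th subdiagonal ($r=0$ the main diagonal) equals $(\tilde c_\gamma)_r$ for $r\le p-1$ and $0$ for $r\ge p$; $C_\gamma^{(p)}$ is its inverse and $B_\gamma^{(p)}:=E(C_\gamma^{(p)})^{-1}$. For an $n\times n$ matrix $C$ and integers $k,b\ge1$ with $(k-1)b\le n-1$, $\mathrm{sens}_{k,b}(C):=\bigl\|\sum_{j=0}^{k-1}C_{[\cdot,jb]}\bigr\|_2$, where $C_{[\cdot,m]}$ is the $m$-th column with columns indexed from $0$. The RMSE is $\mathcal{E}(B,C):=\|B\|_F\cdot\mathrm{sens}_{k,b}(C)/\sqrt n$. *)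

theory Defs
  imports "HOL-Analysis.Analysis"
begin

text \<open>n x n real matrices are represented as functions nat => nat => real, with
 indices 0..n-1 (entries outside are irrelevant / taken to be 0).\<close>

definition ctil :: "real \<Rightarrow> nat \<Rightarrow> real" where
  "ctil \<gamma> i = (-1) ^ i * (\<gamma> gchoose i)"

definition Emat :: "nat \<Rightarrow> nat \<Rightarrow> nat \<Rightarrow> real" where
  "Emat n i j = (if i < n \<and> j < n \<and> j \<le> i then 1 else 0)"

definition Cinv :: "nat \<Rightarrow> real \<Rightarrow> nat \<Rightarrow> nat \<Rightarrow> nat \<Rightarrow> real" where
  "Cinv n \<gamma> p i j = (if i < n \<and> j < n \<and> j \<le> i \<and> i - j \<le> p - 1 then ctil \<gamma> (i - j) else 0)"

definition matmul :: "nat \<Rightarrow> (nat \<Rightarrow> nat \<Rightarrow> real) \<Rightarrow> (nat \<Rightarrow> nat \<Rightarrow> real) \<Rightarrow> nat \<Rightarrow> nat \<Rightarrow> real" where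
  "matmul n A B i j = (if i < n \<and> j < n then (\<Sum>l<n. A i l * B l j) else 0)"

definition is_inverse :: "nat \<Rightarrow> (nat \<Rightarrow> nat \<Rightarrow> real) \<Rightarrow> (nat \<Rightarrow> nat \<Rightarrow> real) \<Rightarrow> bool" where
  "is_inverse n A C \<longleftrightarrow> (\<forall>i j. (n \<le> i \<or> n \<le> j) \<longrightarrow> C i j = 0) \<and>
     (\<forall>i<n. \<forall>j<n. (\<Sum>l<n. A i l * C l j) = (if i = j then 1 else 0)) \<and>
     (\<forall>i<n. \<forall>j<n. (\<Sum>l<n. C i l * A l j) = (if i = j then 1 else 0))"

definition Cmat :: "nat \<Rightarrow> real \<Rightarrow> nat \<Rightarrow> nat \<Rightarrow> nat \<Rightarrow> real" where
  "Cmat n \<gamma> p = (THE C. is_inverse n (Cinv n \<gamma> p) C)"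

definition Bmat :: "nat \<Rightarrow> real \<Rightarrow> nat \<Rightarrow> nat \<Rightarrow> nat \<Rightarrow> real" where
  "Bmat n \<gamma> p = matmul n (Emat n) (Cinv n \<gamma> p)"

definition frob :: "nat \<Rightarrow> (nat \<Rightarrow> nat \<Rightarrow> real) \<Rightarrow> real" where
  "frob n A = sqrt (\<Sum>i<n. \<Sum>j<n. (A i j)\<^sup>2)"

definition sens :: "nat \<Rightarrow> nat \<Rightarrow> nat \<Rightarrow> (nat \<Rightarrow> nat \<Rightarrow> real) \<Rightarrow> real" where
  "sens n k b C = sqrt (\<Sum>i<n. (\<Sum>j<k. C i (j * b))\<^sup>2)"

definition rmse :: "nat \<Rightarrow> nat \<Rightarrow> nat \<Rightarrow> (nat \<Rightarrow> nat \<Rightarrow> real) \<Rightarrow> (nat \<Rightarrow> nat \<Rightarrow> real) \<Rightarrow> real" where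
  "rmse n k b B C = frob n B * sens n k b C / sqrt (real n)"

definition bound :: "nat \<Rightarrow> nat \<Rightarrow> nat \<Rightarrow> nat \<Rightarrow> real \<Rightarrow> real" where
  "bound n p k b \<gamma> =
    (if \<gamma> < 1/2 then
       sqrt k * p powr (1/2 - \<gamma>) / (1/2 - \<gamma>) + (1/\<gamma>) * sqrt (n * k / b)
       + sqrt (k * p / (\<gamma> * (1/2 - \<gamma>) * b)) + p powr (-\<gamma>) * sqrt (n * k / (1/2 - \<gamma>))
     else if \<gamma> = 1/2 then
       sqrt k * ln p + sqrt (n * k / b) + sqrt (k * p * ln p / b) + sqrt (n * k * ln p / p)
     else
       sqrt k * p powr (\<gamma> - 1/2) / ((\<gamma> - 1/2) * sqrt (1 - \<gamma>)) + sqrt (n * k / b)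
       + sqrt k * p powr \<gamma> / ((1 - \<gamma>) * sqrt ((\<gamma> - 1/2) * b))
       + sqrt ((1 - \<gamma>) * n * k / ((\<gamma> - 1/2) * p)))"

end

theory Submission imports Defs "HOL-Computational_Algebra.Formal_Power_Series" begin

lemma toep_sum:
  fixes f g :: "nat \<Rightarrow> real"
  assumes "i < n"
  shows "(\<Sum>l<n. (if l \<le> i \<and> j \<le> l then f (i - l) * g (l - j) else 0)) =
         (if j \<le> i then fps_nth (Abs_fps g * Abs_fps f) (i - j) else 0)"
proof (cases "j \<le> i")
  case True
  have "(\<Sum>l<n. (if l \<le> i \<and> j \<le> l then f (i - l) * g (l - j) else 0)) =
        (\<Sum>l\<in>{j..i}. f (i - l) * g (l - j))"
    using assms by (intro sum.mono_neutral_cong_right) auto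
  also have "\<dots> = (\<Sum>d\<in>{0..i-j}. f (i - j - d) * g d)"
  proof -
    have "(\<Sum>l\<in>{j..i}. f (i - l) * g (l - j)) = (\<Sum>d\<in>(\<lambda>d. d + j) ` {0..i-j}. f (i - d) * g (d - j))"
      using True by (intro sum.cong) (auto simp: image_iff intro!: bexI[of _ "x - j" for x])
    also have "\<dots> = (\<Sum>d\<in>{0..i-j}. f (i - j - d) * g d)"
      by (subst sum.reindex) (auto simp: inj_on_def intro!: sum.cong arg_cong[of _ _ f])
    finally show ?thesis .
  qed
  also have "\<dots> = fps_nth (Abs_fps g * Abs_fps f) (i - j)"
    unfolding fps_mult_nth fps_nth_Abs_fps by (intro sum.cong refl) (simp add: mult.commute)
  finally show ?thesis using True by simp
next
  case False
  then show ?thesis by (simp, intro sum.neutral) auto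
qed


lemma inverse_unique:
  assumes "is_inverse n A C" "is_inverse n A C'"
  shows "C' = C"
proof (intro ext)
  fix i j
  show "C' i j = C i j"
  proof (cases "i < n \<and> j < n")
    case False
    then show ?thesis using assms unfolding is_inverse_def by auto
  next
    case True
    have "C' i j = (\<Sum>l<n. C' i l * (if l = j then 1 else 0))"
      using True by (simp add: if_distrib cong: if_cong)
    also have "\<dots> = (\<Sum>l<n. C' i l * (\<Sum>m<n. A l m * C m j))"
      using True assms(1) unfolding is_inverse_def by (intro sum.cong) auto
    also have "\<dots> = (\<Sum>l<n. \<Sum>m<n. C' i l * A l m * C m j)"
      by (simp add: sum_distrib_left mult.assoc)
    also have "\<dots> = (\<Sum>m<n. \<Sum>l<n. C' i l * A l m * C m j)"
      by (rule sum.swap)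
    also have "\<dots> = (\<Sum>m<n. (\<Sum>l<n. C' i l * A l m) * C m j)"
      by (simp add: sum_distrib_right)
    also have "\<dots> = (\<Sum>m<n. (if i = m then 1 else 0) * C m j)"
      using True assms(2) unfolding is_inverse_def by (intro sum.cong) auto
    also have "\<dots> = (\<Sum>m<n. if i = m then C m j else 0)" by (rule sum.cong) auto
    also have "\<dots> = C i j" using True by simp
    finally show ?thesis .
  qed
qed

definition ta :: "real \<Rightarrow> nat \<Rightarrow> nat \<Rightarrow> real" where
  "ta \<gamma> p r = (if r < p then ctil \<gamma> r else 0)"

definition uu :: "real \<Rightarrow> nat \<Rightarrow> nat \<Rightarrow> real" where
  "uu \<gamma> p m = fps_nth (inverse (Abs_fps (ta \<gamma> p))) m"

definition Cm :: "nat \<Rightarrow> real \<Rightarrow> nat \<Rightarrow> nat \<Rightarrow> nat \<Rightarrow> real" where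
  "Cm n \<gamma> p i j = (if i < n \<and> j < n \<and> j \<le> i then uu \<gamma> p (i - j) else 0)"

lemma ta0: "0 < p \<Longrightarrow> ta \<gamma> p 0 = 1"
  by (simp add: ta_def ctil_def)

lemma Abs_uu: "Abs_fps (uu \<gamma> p) = inverse (Abs_fps (ta \<gamma> p))"
  by (intro fps_ext) (simp add: uu_def)

lemma Cinv_alt: "0 < p \<Longrightarrow> Cinv n \<gamma> p i j = (if i < n \<and> j < n \<and> j \<le> i then ta \<gamma> p (i - j) else 0)"
  by (auto simp: Cinv_def ta_def)

lemma UA: "0 < p \<Longrightarrow> Abs_fps (uu \<gamma> p) * Abs_fps (ta \<gamma> p) = 1"
  unfolding Abs_uu by (rule inverse_mult_eq_1) (simp add: ta0)

lemma AU: "0 < p \<Longrightarrow> Abs_fps (ta \<gamma> p) * Abs_fps (uu \<gamma> p) = 1"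
  unfolding Abs_uu by (rule inverse_mult_eq_1') (simp add: ta0)

lemma Cm_inverse:
  assumes "0 < p"
  shows "is_inverse n (Cinv n \<gamma> p) (Cm n \<gamma> p)"
  unfolding is_inverse_def
proof (intro conjI allI impI)
  fix i j assume "n \<le> i \<or> n \<le> j" then show "Cm n \<gamma> p i j = 0" by (auto simp: Cm_def)
next
  fix i j assume ij: "i < n" "j < n"
  have "(\<Sum>l<n. Cinv n \<gamma> p i l * Cm n \<gamma> p l j) =
     (\<Sum>l<n. (if l \<le> i \<and> j \<le> l then ta \<gamma> p (i - l) * uu \<gamma> p (l - j) else 0))"
    using ij assms by (intro sum.cong) (auto simp: Cinv_alt Cm_def)
  also have "\<dots> = (if i = j then 1 else 0)"
    using ij assms by (simp add: toep_sum UA fps_one_nth)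
  finally show "(\<Sum>l<n. Cinv n \<gamma> p i l * Cm n \<gamma> p l j) = (if i = j then 1 else 0)" .
  have "(\<Sum>l<n. Cm n \<gamma> p i l * Cinv n \<gamma> p l j) =
     (\<Sum>l<n. (if l \<le> i \<and> j \<le> l then uu \<gamma> p (i - l) * ta \<gamma> p (l - j) else 0))"
    using ij assms by (intro sum.cong) (auto simp: Cinv_alt Cm_def)
  also have "\<dots> = (if i = j then 1 else 0)"
    using ij assms by (simp add: toep_sum AU fps_one_nth)
  finally show "(\<Sum>l<n. Cm n \<gamma> p i l * Cinv n \<gamma> p l j) = (if i = j then 1 else 0)" .
qed

lemma Cmat_eq: "0 < p \<Longrightarrow> Cmat n \<gamma> p = Cm n \<gamma> p"
  unfolding Cmat_def by (metis Cm_inverse inverse_unique the_equality)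

definition sp :: "real \<Rightarrow> nat \<Rightarrow> nat \<Rightarrow> real" where
  "sp \<gamma> p d = (\<Sum>r\<le>d. ta \<gamma> p r)"

lemma Bmat_eq:
  assumes "0 < p"
  shows "Bmat n \<gamma> p i j = (if i < n \<and> j < n \<and> j \<le> i then sp \<gamma> p (i - j) else 0)"
proof (cases "i < n \<and> j < n")
  case True
  have "Bmat n \<gamma> p i j = (\<Sum>l<n. (if l \<le> i \<and> j \<le> l then (\<lambda>_. 1) (i - l) * ta \<gamma> p (l - j) else 0))"
    unfolding Bmat_def matmul_def using True assms by (auto intro!: sum.cong simp: Emat_def Cinv_alt)
  also have "\<dots> = (if j \<le> i then fps_nth (Abs_fps (ta \<gamma> p) * Abs_fps (\<lambda>_. 1)) (i - j) else 0)"
    using True by (rule toep_sum[OF conjunct1])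
  also have "\<dots> = (if j \<le> i then sp \<gamma> p (i - j) else 0)"
    by (simp add: fps_mult_nth sp_def atMost_atLeast0)
  finally show ?thesis using True by simp
next
  case False
  then show ?thesis by (auto simp: Bmat_def matmul_def)
qed


lemma ctil_Suc: "real (Suc m) * ctil g (Suc m) = (real m - g) * ctil g m"
proof -
  have "g * (g gchoose m) = of_nat m * (g gchoose m) + of_nat (Suc m) * (g gchoose (Suc m))"
    by (rule gbinomial_mult_1)
  hence h: "real (Suc m) * (g gchoose (Suc m)) = (g - m) * (g gchoose m)" by (simp add: algebra_simps)
  have "real (Suc m) * ctil g (Suc m) = - ((-1)^m * (real (Suc m) * (g gchoose (Suc m))))"
    unfolding ctil_def by simp
  also have "\<dots> = (real m - g) * ctil g m" unfolding h ctil_def by (simp add: algebra_simps)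
  finally show ?thesis .
qed

definition ww :: "real \<Rightarrow> nat \<Rightarrow> real" where
  "ww g m = (-1) ^ m * ((-g) gchoose m)"

lemma ww_Suc: "real (Suc m) * ww g (Suc m) = (real m + g) * ww g m"
proof -
  have "(-g) * ((-g) gchoose m) = of_nat m * ((-g) gchoose m) + of_nat (Suc m) * ((-g) gchoose (Suc m))"
    by (rule gbinomial_mult_1)
  hence h: "real (Suc m) * ((-g) gchoose (Suc m)) = (-g - m) * ((-g) gchoose m)" by (simp add: algebra_simps)
  have "real (Suc m) * ww g (Suc m) = - ((-1)^m * (real (Suc m) * ((-g) gchoose (Suc m))))"
    unfolding ww_def by simp
  also have "\<dots> = (real m + g) * ww g m" unfolding h ww_def by (simp add: algebra_simps)
  finally show ?thesis .
qed

lemma ww_0 [simp]: "ww g 0 = 1" by (simp add: ww_def)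

definition ss :: "real \<Rightarrow> nat \<Rightarrow> real" where
  "ss g d = (\<Sum>r\<le>d. ctil g r)"

lemma ctil_0 [simp]: "ctil g 0 = 1" by (simp add: ctil_def)

lemma ss_rec: "ctil g (Suc d) = - (g / real (Suc d)) * ss g d \<and> ss g (Suc d) = ss g d * (1 - g / real (Suc d))"
proof (induction d)
  case 0
  have "ctil g 1 = - g" using ctil_Suc[of 0 g] by simp
  then show ?case by (simp add: ss_def)
next
  case (Suc d)
  have "real (Suc (Suc d)) * ctil g (Suc (Suc d)) = (real (Suc d) - g) * ctil g (Suc d)"
    by (rule ctil_Suc)
  also have "\<dots> = - g * (ss g d * (1 - g / real (Suc d)))"
    using Suc.IH by (simp add: field_simps)
  also have "\<dots> = - g * ss g (Suc d)" using Suc.IH by simp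
  finally have c: "ctil g (Suc (Suc d)) = - (g / real (Suc (Suc d))) * ss g (Suc d)"
    by (simp add: field_simps del: of_nat_Suc)
  have "ss g (Suc (Suc d)) = ss g (Suc d) + ctil g (Suc (Suc d))"
    by (simp add: ss_def)
  also have "\<dots> = ss g (Suc d) * (1 - g / real (Suc (Suc d)))" using c by (simp add: algebra_simps)
  finally show ?case using c by blast
qed

lemma ss_0 [simp]: "ss g 0 = 1" by (simp add: ss_def)

context
  fixes \<gamma> :: real
  assumes g0: "0 < \<gamma>" and g1: "\<gamma> < 1"
begin

lemma ss_pos: "0 < ss \<gamma> d"
proof (induction d)
  case (Suc d)
  have "0 < 1 - \<gamma> / real (Suc d)" using g1 by (simp add: field_simps)
  then show ?case using Suc ss_rec[of \<gamma> d] by simp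
qed simp

lemma ss_le1: "ss \<gamma> d \<le> 1"
proof (induction d)
  case (Suc d)
  have "1 - \<gamma> / real (Suc d) \<le> 1" using g0 by simp
  moreover have "0 \<le> 1 - \<gamma> / real (Suc d)" using g1 by (simp add: field_simps)
  ultimately show ?case using Suc ss_rec[of \<gamma> d] ss_pos[of d] by (simp add: mult_le_one)
qed simp

lemma ss_Suc_le: "ss \<gamma> (Suc d) \<le> ss \<gamma> d"
  using ss_rec[of \<gamma> d] ss_pos[of d] g0 by (simp add: mult_le_cancel_left1)

lemma ss_mono: "i \<le> j \<Longrightarrow> ss \<gamma> j \<le> ss \<gamma> i"
  by (induction j rule: dec_induct) (auto intro: order.trans[OF ss_Suc_le])

lemma ctil_neg: "1 \<le> r \<Longrightarrow> ctil \<gamma> r \<le> 0"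
  using ss_rec[of \<gamma> "r - 1"] ss_pos[of "r - 1"] g0
  by (cases r) (auto simp: mult_nonneg_nonneg)

end


lemma harm_le_ln: "1 \<le> n \<Longrightarrow> harm n \<le> 1 + ln (real n)"
  using euler_mascheroni_sequence_decreasing[of 1 n] by (simp add: harm_expand)

lemma one_minus_le_exp: "1 - (x::real) \<le> exp (- x)"
  using exp_ge_add_one_self[of "-x"] by simp

lemma exp_harm_powr: "exp (- a * harm d) \<le> real (d + 1) powr (- a)" if "0 \<le> a" for a :: real
proof -
  have "- a * harm d \<le> - a * ln (real d + 1)" using ln_le_harm[of d] that by (simp add: mult_left_mono)
  hence "exp (- a * harm d) \<le> exp (- a * ln (real d + 1))" by simp
  also have "\<dots> = real (d + 1) powr (- a)" by (simp add: powr_def add.commute)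
  finally show ?thesis .
qed

context
  fixes \<gamma> :: real
  assumes g0: "0 < \<gamma>" and g1: "\<gamma> < 1"
begin

lemma ss_exp_up: "ss \<gamma> d \<le> exp (- \<gamma> * harm d)"
proof (induction d)
  case (Suc d)
  have f: "0 \<le> 1 - \<gamma> / real (Suc d)" using g1 by (simp add: field_simps)
  have "ss \<gamma> (Suc d) = ss \<gamma> d * (1 - \<gamma> / real (Suc d))" using ss_rec by blast
  also have "\<dots> \<le> exp (- \<gamma> * harm d) * exp (- (\<gamma> / real (Suc d)))"
    using Suc f ss_pos[OF g0 g1, of d] by (intro mult_mono one_minus_le_exp) auto
  also have "\<dots> = exp (- \<gamma> * harm (Suc d))"
    by (simp add: harm_Suc exp_add[symmetric] algebra_simps divide_inverse)
  finally show ?case .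
qed (simp add: harm_def)

lemma ss_up: "ss \<gamma> d \<le> real (d + 1) powr (- \<gamma>)"
  using ss_exp_up[of d] exp_harm_powr[of \<gamma> d] g0 by linarith

lemma ss_exp_up1: "1 \<le> d \<Longrightarrow> ss \<gamma> d \<le> (1 - \<gamma>) * exp (- \<gamma> * (harm d - 1))"
proof (induction d rule: dec_induct)
  case base
  have "ss \<gamma> 1 = 1 - \<gamma>" using ss_rec[of \<gamma> 0] by simp
  then show ?case by (simp add: harm_def)
next
  case (step d)
  have f: "0 \<le> 1 - \<gamma> / real (Suc d)" using g1 by (simp add: field_simps)
  have "ss \<gamma> (Suc d) = ss \<gamma> d * (1 - \<gamma> / real (Suc d))" using ss_rec by blast
  also have "\<dots> \<le> ((1 - \<gamma>) * exp (- \<gamma> * (harm d - 1))) * exp (- (\<gamma> / real (Suc d)))"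
    using step f ss_pos[OF g0 g1, of d] by (intro mult_mono one_minus_le_exp) auto
  also have "\<dots> = (1 - \<gamma>) * exp (- \<gamma> * (harm (Suc d) - 1))"
    by (simp add: harm_Suc exp_add[symmetric] algebra_simps divide_inverse)
  finally show ?case .
qed

lemma ss_up1: "1 \<le> d \<Longrightarrow> ss \<gamma> d \<le> (1 - \<gamma>) * exp 1 * real (d + 1) powr (- \<gamma>)"
proof -
  assume d: "1 \<le> d"
  have "exp (- \<gamma> * (harm d - 1)) = exp \<gamma> * exp (- \<gamma> * harm d)"
    by (simp add: exp_add[symmetric] algebra_simps)
  also have "\<dots> \<le> exp 1 * real (d + 1) powr (- \<gamma>)"
    using g0 g1 exp_harm_powr[of \<gamma> d] by (intro mult_mono) auto
  finally have "exp (- \<gamma> * (harm d - 1)) \<le> exp 1 * real (d + 1) powr (- \<gamma>)" .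
  hence "(1 - \<gamma>) * exp (- \<gamma> * (harm d - 1)) \<le> (1 - \<gamma>) * (exp 1 * real (d + 1) powr (- \<gamma>))"
    using g1 by (intro mult_left_mono) auto
  thus ?thesis using ss_exp_up1[OF d] by (simp add: mult.assoc)
qed

lemma ss_exp_low: "1 \<le> d \<Longrightarrow> (1 - \<gamma>) * exp (- \<gamma> * harm (d - 1)) \<le> ss \<gamma> d"
proof (induction d rule: dec_induct)
  case base
  have "ss \<gamma> 1 = 1 - \<gamma>" using ss_rec[of \<gamma> 0] by simp
  then show ?case by (simp add: harm_def)
next
  case (step d)
  have dpos: "0 < real d" using step by simp
  have "exp (- (\<gamma> / real d)) = 1 / exp (\<gamma> / real d)" by (simp add: exp_minus field_simps)
  also have "\<dots> \<le> 1 / (1 + \<gamma> / real d)"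
    using g0 dpos by (intro divide_left_mono) (auto intro!: add_pos_pos mult_pos_pos)
  also have "\<dots> = real d / (real d + \<gamma>)" using dpos by (simp add: field_simps)
  also have "\<dots> \<le> 1 - \<gamma> / real (Suc d)"
  proof -
    have "real d * real (Suc d) \<le> (real d + \<gamma>) * (real (Suc d) - \<gamma>)"
      using g0 g1 by (simp add: algebra_simps)
    thus ?thesis using dpos g0 by (simp add: field_simps)
  qed
  finally have e: "exp (- (\<gamma> / real d)) \<le> 1 - \<gamma> / real (Suc d)" .
  have "(1 - \<gamma>) * exp (- \<gamma> * harm (Suc d - 1)) = ((1 - \<gamma>) * exp (- \<gamma> * harm (d - 1))) * exp (- (\<gamma> / real d))"
  proof -
    have "harm d = harm (d - 1) + 1 / real d" using step harm_Suc[of "d - 1"] by (simp add: divide_inverse)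
    thus ?thesis by (simp add: exp_add[symmetric] algebra_simps)
  qed
  also have "\<dots> \<le> ss \<gamma> d * (1 - \<gamma> / real (Suc d))"
    using step e g1 ss_pos[OF g0 g1, of d] by (intro mult_mono) auto
  also have "\<dots> = ss \<gamma> (Suc d)" using ss_rec by metis
  finally show ?case .
qed

lemma ss_low: "1 \<le> d \<Longrightarrow> (1 - \<gamma>) * exp (- 1) * real d powr (- \<gamma>) \<le> ss \<gamma> d"
proof -
  assume d: "1 \<le> d"
  have h: "harm (d - 1) \<le> 1 + ln (real d)"
  proof (cases "d = 1")
    case True then show ?thesis by (simp add: harm_def)
  next
    case False
    hence "harm (d - 1) \<le> 1 + ln (real (d - 1))" using d by (intro harm_le_ln) auto
    also have "\<dots> \<le> 1 + ln (real d)" using d False by simp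
    finally show ?thesis .
  qed
  have "exp (- 1) * real d powr (- \<gamma>) \<le> exp (- \<gamma>) * real d powr (- \<gamma>)"
    using g1 by (intro mult_right_mono) auto
  also have "\<dots> = exp (- \<gamma> * (1 + ln (real d)))"
    using d by (simp add: powr_def exp_add[symmetric] algebra_simps)
  also have "\<dots> \<le> exp (- \<gamma> * harm (d - 1))"
    using h g0 by (simp add: mult_left_mono)
  finally have "exp (- 1) * real d powr (- \<gamma>) \<le> exp (- \<gamma> * harm (d - 1))" .
  hence "(1 - \<gamma>) * (exp (- 1) * real d powr (- \<gamma>)) \<le> (1 - \<gamma>) * exp (- \<gamma> * harm (d - 1))"
    using g1 by (intro mult_left_mono) auto
  thus ?thesis using ss_exp_low[OF d] by (simp add: mult.assoc)
qed

lemma ww_1: "ww \<gamma> 1 = \<gamma>" using ww_Suc[of 0 \<gamma>] by simp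

lemma ww_Suc': "ww \<gamma> (Suc m) = ww \<gamma> m * (1 - (1 - \<gamma>) / real (Suc m))"
proof -
  have "real (Suc m) * ww \<gamma> (Suc m) = (real m + \<gamma>) * ww \<gamma> m" by (rule ww_Suc)
  thus ?thesis by (simp add: field_simps del: of_nat_Suc) (simp add: algebra_simps)
qed

lemma ww_pos: "0 < ww \<gamma> m"
proof (induction m)
  case (Suc m)
  have "0 < 1 - (1 - \<gamma>) / real (Suc m)" using g0 by (simp add: field_simps)
  then show ?case using Suc ww_Suc'[of m] by simp
qed simp

lemma ww_le1: "ww \<gamma> m \<le> 1"
proof (induction m)
  case (Suc m)
  have "1 - (1 - \<gamma>) / real (Suc m) \<le> 1" using g1 by simp
  moreover have "0 \<le> 1 - (1 - \<gamma>) / real (Suc m)" using g0 by (simp add: field_simps)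
  ultimately show ?case using Suc ww_Suc'[of m] ww_pos[of m] by (simp add: mult_le_one)
qed simp

lemma ww_exp_up: "1 \<le> m \<Longrightarrow> ww \<gamma> m \<le> \<gamma> * exp (- (1 - \<gamma>) * (harm m - 1))"
proof (induction m rule: dec_induct)
  case base
  then show ?case using ww_1 by (simp add: harm_def)
next
  case (step m)
  have f: "0 \<le> 1 - (1 - \<gamma>) / real (Suc m)" using g0 by (simp add: field_simps)
  have "ww \<gamma> (Suc m) = ww \<gamma> m * (1 - (1 - \<gamma>) / real (Suc m))" by (rule ww_Suc')
  also have "\<dots> \<le> (\<gamma> * exp (- (1 - \<gamma>) * (harm m - 1))) * exp (- ((1 - \<gamma>) / real (Suc m)))"
    using step f ww_pos[of m] by (intro mult_mono one_minus_le_exp) auto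
  also have "\<dots> = \<gamma> * exp (- (1 - \<gamma>) * (harm (Suc m) - 1))"
    by (simp add: harm_Suc exp_add[symmetric] algebra_simps divide_inverse)
  finally show ?case .
qed

lemma ww_up: "1 \<le> m \<Longrightarrow> ww \<gamma> m \<le> \<gamma> * exp 1 * real (m + 1) powr (\<gamma> - 1)"
proof -
  assume m: "1 \<le> m"
  have "exp (- (1 - \<gamma>) * (harm m - 1)) = exp (1 - \<gamma>) * exp (- (1 - \<gamma>) * harm m)"
    by (simp add: exp_add[symmetric] algebra_simps)
  also have "\<dots> \<le> exp 1 * real (m + 1) powr (- (1 - \<gamma>))"
    using g0 g1 exp_harm_powr[of "1 - \<gamma>" m] by (intro mult_mono) auto
  finally have "exp (- (1 - \<gamma>) * (harm m - 1)) \<le> exp 1 * real (m + 1) powr (\<gamma> - 1)" by simp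
  hence "\<gamma> * exp (- (1 - \<gamma>) * (harm m - 1)) \<le> \<gamma> * (exp 1 * real (m + 1) powr (\<gamma> - 1))"
    using g0 by (intro mult_left_mono) auto
  thus ?thesis using ww_exp_up[OF m] by (simp add: mult.assoc)
qed

end

lemma kaluza:
  fixes s q :: "nat \<Rightarrow> real"
  assumes pos: "\<And>j. s j > 0"
    and mono: "\<And>i j. i \<le> j \<Longrightarrow> s (Suc i) / s i \<le> s (Suc j) / s j"
    and eq: "\<And>m. 1 \<le> m \<Longrightarrow> s m = (\<Sum>j<m. q (m - j) * s j)"
  shows "1 \<le> m \<Longrightarrow> 0 \<le> q m"
proof (induction m rule: less_induct)
  case (less m)
  show ?case
  proof (cases "m = 1")
    case True
    have "s 1 = q 1 * s 0" using eq[of 1] by simp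
    hence "q 1 = s 1 / s 0" using pos[of 0] by (simp add: field_simps)
    thus ?thesis using True pos[of 1] pos[of 0] by simp
  next
    case False
    then obtain m' where m': "m = Suc m'" "1 \<le> m'" using less.prems by (cases m) auto
    define \<rho> where "\<rho> = s (Suc m') / s m'"
    have "s (Suc m') = (\<Sum>j<Suc m'. q (Suc m' - j) * s j)" using eq[of "Suc m'"] by simp
    also have "\<dots> = q (Suc m') * s 0 + (\<Sum>j<m'. q (m' - j) * s (Suc j))"
      unfolding sum.lessThan_Suc_shift by simp
    finally have e1: "s (Suc m') = q (Suc m') * s 0 + (\<Sum>j<m'. q (m' - j) * s (Suc j))" .
    have "s (Suc m') = \<rho> * s m'" using pos[of m'] by (simp add: \<rho>_def)
    also have "\<dots> = (\<Sum>j<m'. q (m' - j) * (\<rho> * s j))"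
      using eq[OF m'(2)] by (simp add: sum_distrib_left algebra_simps)
    finally have e2: "s (Suc m') = (\<Sum>j<m'. q (m' - j) * (\<rho> * s j))" .
    have "q (Suc m') * s 0 = (\<Sum>j<m'. q (m' - j) * (\<rho> * s j - s (Suc j)))"
      using e1 e2 by (simp add: sum_subtractf right_diff_distrib)
    also have "\<dots> \<ge> 0"
    proof (intro sum_nonneg mult_nonneg_nonneg)
      fix j assume j: "j \<in> {..<m'}"
      show "0 \<le> q (m' - j)" using j m' by (intro less.IH) auto
      have "s (Suc j) / s j \<le> \<rho>" unfolding \<rho>_def using j by (intro mono) auto
      hence "s (Suc j) \<le> \<rho> * s j" using pos[of j] by (simp add: field_simps)
      thus "0 \<le> \<rho> * s j - s (Suc j)" by simp
    qed
    finally show ?thesis using m' pos[of 0] by (simp add: zero_le_mult_iff)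
  qed
qed

definition sig :: "real \<Rightarrow> nat \<Rightarrow> real" where "sig g p = ss g (p - 1)"

context
  fixes \<gamma> :: real and p :: nat
  assumes g0: "0 < \<gamma>" and g1: "\<gamma> < 1" and p2: "2 \<le> p"
begin

lemma conv_u: "(\<Sum>r\<le>m. ta \<gamma> p r * uu \<gamma> p (m - r)) = (if m = 0 then 1 else 0)"
proof -
  have "fps_nth (Abs_fps (ta \<gamma> p) * Abs_fps (uu \<gamma> p)) m = fps_nth 1 m" using AU p2 by simp
  thus ?thesis by (simp add: fps_mult_nth atMost_atLeast0 fps_one_nth)
qed

lemma uu_0 [simp]: "uu \<gamma> p 0 = 1"
  using conv_u[of 0] ta0[of p \<gamma>] p2 by simp

lemma conv_w: "1 \<le> m \<Longrightarrow> (\<Sum>r\<le>m. ctil \<gamma> r * ww \<gamma> (m - r)) = 0"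
proof -
  assume m: "1 \<le> m"
  have "(\<Sum>r\<le>m. ctil \<gamma> r * ww \<gamma> (m - r)) = (-1)^m * (\<Sum>k=0..m. (\<gamma> gchoose k) * ((-\<gamma>) gchoose (m - k)))"
    unfolding sum_distrib_left atMost_atLeast0
  proof (intro sum.cong refl)
    fix r assume "r \<in> {0..m}"
    hence "(-1::real)^m = (-1)^r * (-1)^(m - r)" by (simp add: power_add[symmetric])
    thus "ctil \<gamma> r * ww \<gamma> (m - r) = (-1)^m * ((\<gamma> gchoose r) * ((-\<gamma>) gchoose (m - r)))"
      by (simp add: ctil_def ww_def)
  qed
  also have "\<dots> = (-1)^m * ((\<gamma> + -\<gamma>) gchoose m)" by (simp only: gbinomial_Vandermonde)
  also have "\<dots> = 0" using m by (cases m) auto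
  finally show ?thesis .
qed

lemma split0: "(\<Sum>r\<le>m. f r) = f 0 + (\<Sum>r\<in>{1..m}. f (r::nat))" for f :: "nat \<Rightarrow> real"
proof -
  have "{..m} = insert 0 {1..m}" by auto
  thus ?thesis by simp
qed

lemma uu_rec: "1 \<le> m \<Longrightarrow> uu \<gamma> p m = (\<Sum>r\<in>{1..m}. (- ta \<gamma> p r) * uu \<gamma> p (m - r))"
  using conv_u[of m] ta0[of p \<gamma>] p2 by (simp add: split0 sum_negf)

lemma ww_rec: "1 \<le> m \<Longrightarrow> ww \<gamma> m = (\<Sum>r\<in>{1..m}. (- ctil \<gamma> r) * ww \<gamma> (m - r))"
  using conv_w[of m] by (simp add: split0 sum_negf)

lemma uu_bounds: "0 \<le> uu \<gamma> p m \<and> uu \<gamma> p m \<le> ww \<gamma> m"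
proof (induction m rule: less_induct)
  case (less m)
  show ?case
  proof (cases "m = 0")
    case True then show ?thesis by simp
  next
    case False
    hence m: "1 \<le> m" by simp
    have t: "0 \<le> (- ta \<gamma> p r) * uu \<gamma> p (m - r) \<and> (- ta \<gamma> p r) * uu \<gamma> p (m - r) \<le> (- ctil \<gamma> r) * ww \<gamma> (m - r)"
      if r: "r \<in> {1..m}" for r
    proof -
      have c: "ctil \<gamma> r \<le> 0" using r ctil_neg[OF g0 g1] by auto
      have ih: "0 \<le> uu \<gamma> p (m - r)" "uu \<gamma> p (m - r) \<le> ww \<gamma> (m - r)" using less.IH[of "m - r"] r by auto
      have a: "0 \<le> - ta \<gamma> p r" "- ta \<gamma> p r \<le> - ctil \<gamma> r" using c by (auto simp: ta_def)
      have "0 \<le> (- ta \<gamma> p r) * uu \<gamma> p (m - r)" using a(1) ih(1) by (rule mult_nonneg_nonneg)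
      moreover have "(- ta \<gamma> p r) * uu \<gamma> p (m - r) \<le> (- ctil \<gamma> r) * ww \<gamma> (m - r)"
        using a(2) ih(2) c ih(1) by (intro mult_mono) auto
      ultimately show ?thesis by blast
    qed
    show ?thesis using uu_rec[OF m] ww_rec[OF m] t
      by (auto intro!: sum_nonneg sum_mono)
  qed
qed

lemma uu_nonneg: "0 \<le> uu \<gamma> p m" using uu_bounds by blast
lemma uu_le_ww: "uu \<gamma> p m \<le> ww \<gamma> m" using uu_bounds by blast

lemma sp_eq: "sp \<gamma> p d = ss \<gamma> (min d (p - 1))"
proof -
  have "sp \<gamma> p d = (\<Sum>r\<in>{r\<in>{..d}. r < p}. ctil \<gamma> r)"
    unfolding sp_def ta_def by (rule sum.inter_filter[symmetric]) simp
  also have "{r\<in>{..d}. r < p} = {..min d (p - 1)}" using p2 by auto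
  finally show ?thesis by (simp add: ss_def)
qed


lemma sp_pos: "0 < sp \<gamma> p d" using sp_eq ss_pos[OF g0 g1] by simp
lemma sp_ge: "sig \<gamma> p \<le> sp \<gamma> p d" unfolding sp_eq sig_def by (intro ss_mono[OF g0 g1]) auto
lemma sp_small: "d < p \<Longrightarrow> sp \<gamma> p d = ss \<gamma> d" using sp_eq by simp
lemma sp_big: "p \<le> d \<Longrightarrow> sp \<gamma> p d = sig \<gamma> p" using sp_eq unfolding sig_def by simp

lemma sp_ratio: "sp \<gamma> p (Suc i) / sp \<gamma> p i = (if Suc i \<le> p - 1 then 1 - \<gamma> / real (Suc i) else 1)"
proof (cases "Suc i \<le> p - 1")
  case True
  then show ?thesis using sp_eq ss_rec[of \<gamma> i] ss_pos[OF g0 g1, of i] by simp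
next
  case False
  then have "min (Suc i) (p - 1) = min i (p - 1)" by simp
  then show ?thesis using False sp_eq sp_pos[of i] by (simp del: min_def)
qed

lemma sp_ratio_mono: "i \<le> j \<Longrightarrow> sp \<gamma> p (Suc i) / sp \<gamma> p i \<le> sp \<gamma> p (Suc j) / sp \<gamma> p j"
  unfolding sp_ratio using g0
  by (auto simp: frac_le divide_le_eq_1 intro: divide_left_mono)

lemma usum_id: "(\<Sum>m\<le>N. uu \<gamma> p m * sp \<gamma> p (N - m)) = 1"
proof (induction N)
  case 0
  then show ?case using sp_small[of 0] p2 by simp
next
  case (Suc N)
  have "(\<Sum>m\<le>Suc N. uu \<gamma> p m * sp \<gamma> p (Suc N - m)) =
        (\<Sum>m\<le>N. uu \<gamma> p m * sp \<gamma> p (Suc N - m)) + uu \<gamma> p (Suc N) * sp \<gamma> p 0" by simp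
  also have "(\<Sum>m\<le>N. uu \<gamma> p m * sp \<gamma> p (Suc N - m)) =
        (\<Sum>m\<le>N. uu \<gamma> p m * sp \<gamma> p (N - m)) + (\<Sum>m\<le>N. uu \<gamma> p m * ta \<gamma> p (Suc N - m))"
    unfolding sum.distrib[symmetric]
  proof (intro sum.cong refl)
    fix m assume "m \<in> {..N}"
    hence "Suc N - m = Suc (N - m)" by auto
    thus "uu \<gamma> p m * sp \<gamma> p (Suc N - m) = uu \<gamma> p m * sp \<gamma> p (N - m) + uu \<gamma> p m * ta \<gamma> p (Suc N - m)"
      by (simp add: sp_def algebra_simps)
  qed
  also have "sp \<gamma> p 0 = ta \<gamma> p 0" by (simp add: sp_def)
  finally have "(\<Sum>m\<le>Suc N. uu \<gamma> p m * sp \<gamma> p (Suc N - m)) =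
     1 + (\<Sum>m\<le>Suc N. uu \<gamma> p m * ta \<gamma> p (Suc N - m))" using Suc by simp
  also have "(\<Sum>m\<le>Suc N. uu \<gamma> p m * ta \<gamma> p (Suc N - m)) = (\<Sum>r\<le>Suc N. ta \<gamma> p r * uu \<gamma> p (Suc N - r))"
    unfolding atMost_atLeast0 by (subst sum.atLeastAtMost_rev) (auto intro!: sum.cong simp: mult.commute)
  also have "\<dots> = 0" using conv_u by simp
  finally show ?case by simp
qed

end

context
  fixes \<gamma> :: real and p :: nat
  assumes g0: "0 < \<gamma>" and g1: "\<gamma> < 1" and p2: "2 \<le> p"
begin

lemma usum_id': "(\<Sum>j\<le>N. uu \<gamma> p (N - j) * sp \<gamma> p j) = 1"
proof -
  have "(\<Sum>j\<le>N. uu \<gamma> p (N - j) * sp \<gamma> p j) = (\<Sum>m\<le>N. uu \<gamma> p m * sp \<gamma> p (N - m))"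
    unfolding atMost_atLeast0 by (subst sum.atLeastAtMost_rev) (auto intro!: sum.cong)
  thus ?thesis using usum_id[OF g0 g1 p2] by simp
qed

lemma uu_Suc_le: "uu \<gamma> p (Suc k) \<le> uu \<gamma> p k"
proof -
  define t where "t m = uu \<gamma> p m - (if m = 0 then 0 else uu \<gamma> p (m - 1))" for m
  define q where "q m = - t m" for m
  have eq: "sp \<gamma> p m = (\<Sum>j<m. q (m - j) * sp \<gamma> p j)" if m: "1 \<le> m" for m
  proof -
    obtain k where k: "m = Suc k" using m by (cases m) auto
    have "(\<Sum>j\<le>Suc k. t (Suc k - j) * sp \<gamma> p j) =
          (\<Sum>j\<le>Suc k. uu \<gamma> p (Suc k - j) * sp \<gamma> p j) -
          (\<Sum>j\<le>Suc k. (if Suc k - j = 0 then 0 else uu \<gamma> p (k - j)) * sp \<gamma> p j)"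
      unfolding sum_subtractf[symmetric] t_def by (intro sum.cong refl) (auto simp: algebra_simps)
    also have "(\<Sum>j\<le>Suc k. (if Suc k - j = 0 then 0 else uu \<gamma> p (k - j)) * sp \<gamma> p j) =
               (\<Sum>j\<le>k. uu \<gamma> p (k - j) * sp \<gamma> p j)"
      by (simp add: Suc_diff_le)
    finally have "(\<Sum>j\<le>Suc k. t (Suc k - j) * sp \<gamma> p j) = 0" using usum_id' by simp
    hence "t 0 * sp \<gamma> p (Suc k) + (\<Sum>j<Suc k. t (Suc k - j) * sp \<gamma> p j) = 0"
      by (simp add: lessThan_Suc_atMost[symmetric] add.commute)
    moreover have "t 0 = 1" using uu_0[OF g0 g1 p2] by (simp add: t_def)
    ultimately show ?thesis using k by (simp add: q_def sum_negf)
  qed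
  have "0 \<le> q (Suc k)"
    using kaluza[of "sp \<gamma> p" q "Suc k"] sp_pos[OF g0 g1 p2] sp_ratio_mono[OF g0 g1 p2] eq by auto
  thus ?thesis by (simp add: q_def t_def)
qed

lemma uu_antimono: "i \<le> j \<Longrightarrow> uu \<gamma> p j \<le> uu \<gamma> p i"
  by (induction j rule: dec_induct) (auto intro: order.trans[OF uu_Suc_le])

lemma uu_sum_le: "sig \<gamma> p * (\<Sum>m<N. uu \<gamma> p m) \<le> 1"
proof (cases N)
  case 0 then show ?thesis by simp
next
  case (Suc M)
  have "sig \<gamma> p * (\<Sum>m<N. uu \<gamma> p m) = (\<Sum>m\<le>M. uu \<gamma> p m * sig \<gamma> p)"
    by (simp add: Suc lessThan_Suc_atMost sum_distrib_left mult.commute)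
  also have "\<dots> \<le> (\<Sum>m\<le>M. uu \<gamma> p m * sp \<gamma> p (M - m))"
    by (intro sum_mono mult_left_mono sp_ge[OF g0 g1 p2] uu_nonneg[OF g0 g1 p2])
  also have "\<dots> = 1" by (rule usum_id[OF g0 g1 p2])
  finally show ?thesis .
qed

lemma sig_pos: "0 < sig \<gamma> p" unfolding sig_def using ss_pos[OF g0 g1] by simp

lemma uu_sum_le': "(\<Sum>m<N. uu \<gamma> p m) \<le> 1 / sig \<gamma> p"
  using uu_sum_le[of N] sig_pos by (simp add: field_simps)

end

lemma sum_inj_le:
  fixes g :: "'b \<Rightarrow> real"
  assumes "inj_on \<phi> A" "\<phi> ` A \<subseteq> B" "finite B" "\<And>x. x \<in> B \<Longrightarrow> 0 \<le> g x"
  shows "(\<Sum>a\<in>A. g (\<phi> a)) \<le> (\<Sum>x\<in>B. g x)"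
proof -
  have "(\<Sum>a\<in>A. g (\<phi> a)) = (\<Sum>x\<in>\<phi> ` A. g x)" using assms(1) by (simp add: sum.reindex)
  also have "\<dots> \<le> (\<Sum>x\<in>B. g x)" using assms by (intro sum_mono2) auto
  finally show ?thesis .
qed

lemma block_bound:
  fixes u :: "nat \<Rightarrow> real"
  assumes nn: "\<And>m. 0 \<le> u m" and anti: "\<And>i j. i \<le> j \<Longrightarrow> u j \<le> u i"
  shows "J * b \<le> i \<Longrightarrow> real b * (\<Sum>j<J. u (i - j * b)) \<le> (\<Sum>q\<in>{i + 1 - J * b..<i + 1}. u q)"
proof (induction J)
  case 0 then show ?case by simp
next
  case (Suc J)
  have hJ: "J * b \<le> i" using Suc.prems by simp
  have "real b * u (i - J * b) = (\<Sum>q\<in>{i + 1 - Suc J * b..<i + 1 - J * b}. u (i - J * b))"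
    using Suc.prems by simp
  also have "\<dots> \<le> (\<Sum>q\<in>{i + 1 - Suc J * b..<i + 1 - J * b}. u q)"
    by (intro sum_mono anti) auto
  finally have a: "real b * u (i - J * b) \<le> (\<Sum>q\<in>{i + 1 - Suc J * b..<i + 1 - J * b}. u q)" .
  have "real b * (\<Sum>j<Suc J. u (i - j * b)) = real b * (\<Sum>j<J. u (i - j * b)) + real b * u (i - J * b)"
    by (simp add: algebra_simps)
  also have "\<dots> \<le> (\<Sum>q\<in>{i + 1 - J * b..<i + 1}. u q) + (\<Sum>q\<in>{i + 1 - Suc J * b..<i + 1 - J * b}. u q)"
    using Suc.IH[OF hJ] a by linarith
  also have "\<dots> = (\<Sum>q\<in>{i + 1 - Suc J * b..<i + 1}. u q)"
    using sum.atLeastLessThan_concat[of "i + 1 - Suc J * b" "i + 1 - J * b" "i + 1" u] hJ Suc.prems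
    by (simp add: add.commute)
  finally show ?case .
qed

lemma sens_bound:
  fixes u :: "nat \<Rightarrow> real"
  assumes nn: "\<And>m. 0 \<le> u m" and anti: "\<And>i j. i \<le> j \<Longrightarrow> u j \<le> u i"
    and b: "1 \<le> b" and k: "1 \<le> k"
  shows "(\<Sum>i<n. (\<Sum>j<k. if j * b \<le> i then u (i - j * b) else 0)\<^sup>2)
         \<le> real k * (\<Sum>m<n. (u m)\<^sup>2) + 2 * real k * (\<Sum>m<n. u m)\<^sup>2 / real b"
proof -
  define U where "U = (\<Sum>m<n. u m)"
  define v where "v i = (\<Sum>j<k. if j * b \<le> i then u (i - j * b) else 0)" for i
  define J where "J i = min (k - 1) (i div b)" for i
  define x where "x i = u (i - J i * b)" for i
  define r where "r i = (\<Sum>j<J i. u (i - j * b))" for i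
  have U0: "0 \<le> U" unfolding U_def using nn by (simp add: sum_nonneg)
  have Jb: "J i * b \<le> i" for i
  proof -
    have "J i * b \<le> (i div b) * b" unfolding J_def by (intro mult_right_mono) auto
    also have "\<dots> \<le> i" by simp
    finally show ?thesis .
  qed
  have Jk: "J i < k" for i unfolding J_def using k by auto
  have vxr: "v i = x i + r i" for i
  proof -
    have set: "{j\<in>{..<k}. j * b \<le> i} = {..J i}"
    proof (intro set_eqI iffI)
      fix j assume "j \<in> {j\<in>{..<k}. j * b \<le> i}"
      hence "j < k" "j * b \<le> i" by auto
      moreover hence "j \<le> i div b" using b by (simp add: less_eq_div_iff_mult_less_eq)
      ultimately show "j \<in> {..J i}" unfolding J_def by auto
    next
      fix j assume "j \<in> {..J i}"
      hence "j \<le> J i" by simp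
      hence "j * b \<le> J i * b" by simp
      hence "j * b \<le> i" using Jb[of i] by (rule order.trans)
      thus "j \<in> {j\<in>{..<k}. j * b \<le> i}" using Jk[of i] \<open>j \<le> J i\<close> by auto
    qed
    have "v i = (\<Sum>j\<in>{j\<in>{..<k}. j * b \<le> i}. u (i - j * b))"
      unfolding v_def by (rule sum.inter_filter[symmetric]) simp
    also have "\<dots> = (\<Sum>j\<le>J i. u (i - j * b))" unfolding set ..
    also have "\<dots> = r i + x i" unfolding r_def x_def lessThan_Suc_atMost[symmetric] by simp
    finally show ?thesis by simp
  qed
  have x0: "0 \<le> x i" for i unfolding x_def using nn by simp
  have r0: "0 \<le> r i" for i unfolding r_def using nn by (simp add: sum_nonneg)
  have rU: "real b * r i \<le> U" if i: "i < n" for i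
  proof -
    have "real b * r i \<le> (\<Sum>q\<in>{i + 1 - J i * b..<i + 1}. u q)"
      unfolding r_def by (rule block_bound[OF nn anti Jb])
    also have "\<dots> \<le> U" unfolding U_def using i nn by (intro sum_mono2) auto
    finally show ?thesis .
  qed
  have rU': "r i \<le> U / real b" if "i < n" for i
    using rU[OF that] b by (simp add: field_simps)
  have sumv: "(\<Sum>i<n. v i) \<le> real k * U"
  proof -
    have "(\<Sum>i<n. v i) = (\<Sum>j<k. \<Sum>i<n. if j * b \<le> i then u (i - j * b) else 0)"
      unfolding v_def by (rule sum.swap)
    also have "\<dots> \<le> (\<Sum>j<k. U)"
    proof (intro sum_mono)
      fix j
      have "(\<Sum>i<n. if j * b \<le> i then u (i - j * b) else 0) = (\<Sum>i\<in>{i\<in>{..<n}. j * b \<le> i}. u (i - j * b))"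
        by (rule sum.inter_filter[symmetric]) simp
      also have "\<dots> \<le> U" unfolding U_def
        using nn by (intro sum_inj_le) (auto simp: inj_on_def)
      finally show "(\<Sum>i<n. if j * b \<le> i then u (i - j * b) else 0) \<le> U" .
    qed
    finally show ?thesis by simp
  qed
  have sumx: "(\<Sum>i<n. (x i)\<^sup>2) \<le> real k * (\<Sum>m<n. (u m)\<^sup>2)"
  proof -
    have "(\<Sum>i<n. (x i)\<^sup>2) = (\<Sum>i<n. (\<lambda>(j, m). (u m)\<^sup>2) (J i, i - J i * b))" by (simp add: x_def)
    also have "\<dots> \<le> (\<Sum>z\<in>{..<k} \<times> {..<n}. (\<lambda>(j, m). (u m)\<^sup>2) z)"
    proof (rule sum_inj_le)
      show "inj_on (\<lambda>i. (J i, i - J i * b)) {..<n}"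
      proof (rule inj_onI)
        fix i i' assume "(J i, i - J i * b) = (J i', i' - J i' * b)"
        hence e: "J i = J i'" "i - J i * b = i' - J i' * b" by auto
        have "i - J i' * b = i' - J i' * b" using e by simp
        moreover have "J i' * b \<le> i" using Jb[of i] e(1) by simp
        ultimately show "i = i'" using Jb[of i'] by linarith
      qed
    qed (auto simp: Jk)
    also have "\<dots> = real k * (\<Sum>m<n. (u m)\<^sup>2)"
      by (simp add: sum.cartesian_product[symmetric])
    finally show ?thesis .
  qed
  have "(\<Sum>i<n. (v i)\<^sup>2) \<le> (\<Sum>i<n. (x i)\<^sup>2 + 2 * (U / real b) * v i)"
  proof (intro sum_mono)
    fix i assume "i \<in> {..<n}"
    hence ri: "r i \<le> U / real b" using rU' by simp
    have "(v i)\<^sup>2 = (x i)\<^sup>2 + 2 * x i * r i + (r i)\<^sup>2" unfolding vxr by (simp add: power2_eq_square algebra_simps)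
    also have "\<dots> \<le> (x i)\<^sup>2 + 2 * r i * v i" unfolding vxr using x0[of i] r0[of i]
      by (simp add: power2_eq_square algebra_simps)
    also have "\<dots> \<le> (x i)\<^sup>2 + 2 * (U / real b) * v i"
    proof -
      have "r i * v i \<le> (U / real b) * v i" using ri x0[of i] r0[of i] vxr[of i] by (intro mult_right_mono) auto
      thus ?thesis by simp
    qed
    finally show "(v i)\<^sup>2 \<le> (x i)\<^sup>2 + 2 * (U / real b) * v i" .
  qed
  also have "\<dots> = (\<Sum>i<n. (x i)\<^sup>2) + 2 * (U / real b) * (\<Sum>i<n. v i)"
    by (simp add: sum.distrib sum_distrib_left)
  also have "\<dots> \<le> real k * (\<Sum>m<n. (u m)\<^sup>2) + 2 * (U / real b) * (real k * U)"
    using sumx sumv U0 b by (intro add_mono mult_left_mono) auto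
  also have "\<dots> = real k * (\<Sum>m<n. (u m)\<^sup>2) + 2 * real k * U\<^sup>2 / real b"
    by (simp add: power2_eq_square)
  finally show ?thesis unfolding v_def U_def .
qed


lemma exp1_le: "exp (1::real) \<le> 272/100"
proof -
  have "exp 1 < exp (ln (272/100::real))" using ln_272_gt_1 by (simp only: exp_less_cancel_iff)
  thus ?thesis by simp
qed

lemma mvt_pow:
  fixes x \<beta> :: real
  assumes "1 < x"
  shows "\<exists>\<xi>. x - 1 < \<xi> \<and> \<xi> < x \<and> x powr \<beta> - (x - 1) powr \<beta> = \<beta> * \<xi> powr (\<beta> - 1)"
proof -
  have "\<exists>z. x - 1 < z \<and> z < x \<and> x powr \<beta> - (x - 1) powr \<beta> = (x - (x - 1)) * (\<beta> * z powr (\<beta> - 1))"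
    using assms by (intro MVT2) (auto intro!: has_real_derivative_powr)
  thus ?thesis by simp
qed

lemma term_pos:
  fixes x \<beta> :: real
  assumes "0 < \<beta>" "\<beta> < 1" "1 \<le> x"
  shows "\<beta> * x powr (\<beta> - 1) \<le> x powr \<beta> - (x - 1) powr \<beta>"
proof (cases "x = 1")
  case True then show ?thesis using assms by simp
next
  case False
  hence x: "1 < x" using assms by simp
  obtain \<xi> where xi: "x - 1 < \<xi>" "\<xi> < x" "x powr \<beta> - (x - 1) powr \<beta> = \<beta> * \<xi> powr (\<beta> - 1)"
    using mvt_pow[OF x] by blast
  have "x powr (\<beta> - 1) \<le> \<xi> powr (\<beta> - 1)" using xi x assms by (intro powr_mono2') auto
  thus ?thesis using xi(3) assms by simp
qed

lemma term_neg:
  fixes x \<beta> :: real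
  assumes "\<beta> < 0" "1 < x"
  shows "- \<beta> * x powr (\<beta> - 1) \<le> (x - 1) powr \<beta> - x powr \<beta>"
proof -
  obtain \<xi> where xi: "x - 1 < \<xi>" "\<xi> < x" "x powr \<beta> - (x - 1) powr \<beta> = \<beta> * \<xi> powr (\<beta> - 1)"
    using mvt_pow[OF assms(2)] by blast
  have "x powr (\<beta> - 1) \<le> \<xi> powr (\<beta> - 1)" using xi assms by (intro powr_mono2') auto
  hence "- \<beta> * x powr (\<beta> - 1) \<le> - \<beta> * \<xi> powr (\<beta> - 1)" using assms by (intro mult_left_mono) auto
  thus ?thesis using xi(3) by simp
qed

lemma psum_pos:
  fixes \<beta> :: real
  assumes "0 < \<beta>" "\<beta> < 1"
  shows "(\<Sum>j\<in>{1..N}. real j powr (\<beta> - 1)) \<le> real N powr \<beta> / \<beta>"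
proof (induction N)
  case 0 then show ?case by simp
next
  case (Suc N)
  have t: "\<beta> * real (Suc N) powr (\<beta> - 1) \<le> real (Suc N) powr \<beta> - real N powr \<beta>"
    using term_pos[OF assms, of "real (Suc N)"] by simp
  have "(\<Sum>j\<in>{1..Suc N}. real j powr (\<beta> - 1)) = (\<Sum>j\<in>{1..N}. real j powr (\<beta> - 1)) + real (Suc N) powr (\<beta> - 1)"
    by simp
  also have "\<dots> \<le> real N powr \<beta> / \<beta> + (real (Suc N) powr \<beta> - real N powr \<beta>) / \<beta>"
    using Suc.IH t assms by (intro add_mono) (auto simp: field_simps)
  also have "\<dots> = real (Suc N) powr \<beta> / \<beta>" by (simp add: diff_divide_distrib)
  finally show ?case .
qed

lemma psum_neg:
  fixes \<beta> :: real
  assumes "\<beta> < 0"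
  shows "(\<Sum>j\<in>{2..N}. real j powr (\<beta> - 1)) \<le> 1 / (- \<beta>)"
proof -
  have "1 \<le> N \<Longrightarrow> (\<Sum>j\<in>{2..N}. real j powr (\<beta> - 1)) \<le> (1 - real N powr \<beta>) / (- \<beta>)"
  proof (induction N rule: dec_induct)
    case base then show ?case by simp
  next
    case (step N)
    have t: "- \<beta> * real (Suc N) powr (\<beta> - 1) \<le> real N powr \<beta> - real (Suc N) powr \<beta>"
      using term_neg[OF assms, of "real (Suc N)"] step by simp
    have "(\<Sum>j\<in>{2..Suc N}. real j powr (\<beta> - 1)) = (\<Sum>j\<in>{2..N}. real j powr (\<beta> - 1)) + real (Suc N) powr (\<beta> - 1)"
      using step by (simp add: sum.atLeast_Suc_atMost_Suc_shift del: sum.cl_ivl_Suc) (simp add: sum.cl_ivl_Suc)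
    also have "\<dots> \<le> (1 - real N powr \<beta>) / (- \<beta>) + (real N powr \<beta> - real (Suc N) powr \<beta>) / (- \<beta>)"
      using step.IH t assms by (intro add_mono) (auto simp: field_simps)
    also have "\<dots> = (1 - real (Suc N) powr \<beta>) / (- \<beta>)" by (simp add: diff_divide_distrib)
    finally show ?case .
  qed
  moreover have "(1 - real N powr \<beta>) / (- \<beta>) \<le> 1 / (- \<beta>)" using assms
    by (intro divide_right_mono) auto
  ultimately show ?thesis using assms by (cases "N = 0") auto
qed

lemma psum_harm: "1 \<le> N \<Longrightarrow> (\<Sum>j\<in>{1..N}. 1 / real j) \<le> 1 + ln (real N)"
  using harm_le_ln[of N] by (simp add: harm_def divide_inverse)


lemma split_sum: "p \<le> n \<Longrightarrow> (\<Sum>m<n. f m) = (\<Sum>m<p. f m) + (\<Sum>m\<in>{p..<n}. f (m::nat))"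
  for f :: "nat \<Rightarrow> real"
  using sum.atLeastLessThan_concat[of 0 p n f] by (simp add: lessThan_atLeast0)

context
  fixes \<gamma> :: real and p :: nat
  assumes g0: "0 < \<gamma>" and g1: "\<gamma> < 1" and p2: "2 \<le> p"
begin

lemma Q_bound: "p \<le> n \<Longrightarrow> (\<Sum>d<n. (sp \<gamma> p d)\<^sup>2) \<le> (\<Sum>d<p. (ss \<gamma> d)\<^sup>2) + real n * (sig \<gamma> p)\<^sup>2"
proof -
  assume pn: "p \<le> n"
  have "(\<Sum>d<n. (sp \<gamma> p d)\<^sup>2) = (\<Sum>d<p. (sp \<gamma> p d)\<^sup>2) + (\<Sum>d\<in>{p..<n}. (sp \<gamma> p d)\<^sup>2)"
    using pn by (rule split_sum)
  also have "(\<Sum>d<p. (sp \<gamma> p d)\<^sup>2) = (\<Sum>d<p. (ss \<gamma> d)\<^sup>2)"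
    by (intro sum.cong refl) (simp add: sp_small[OF g0 g1 p2])
  also have "(\<Sum>d\<in>{p..<n}. (sp \<gamma> p d)\<^sup>2) = real (n - p) * (sig \<gamma> p)\<^sup>2"
    by (simp add: sp_big[OF g0 g1 p2])
  also have "real (n - p) * (sig \<gamma> p)\<^sup>2 \<le> real n * (sig \<gamma> p)\<^sup>2"
    by (intro mult_right_mono) auto
  finally show ?thesis by simp
qed

lemma N2_bound: "p \<le> n \<Longrightarrow> (\<Sum>m<n. (uu \<gamma> p m)\<^sup>2) \<le> (\<Sum>m<p. (ww \<gamma> m)\<^sup>2) + ww \<gamma> (p - 1) / sig \<gamma> p"
proof -
  assume pn: "p \<le> n"
  have "(\<Sum>m<n. (uu \<gamma> p m)\<^sup>2) = (\<Sum>m<p. (uu \<gamma> p m)\<^sup>2) + (\<Sum>m\<in>{p..<n}. (uu \<gamma> p m)\<^sup>2)"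
    using pn by (rule split_sum)
  also have "(\<Sum>m<p. (uu \<gamma> p m)\<^sup>2) \<le> (\<Sum>m<p. (ww \<gamma> m)\<^sup>2)"
    by (intro sum_mono power_mono uu_le_ww[OF g0 g1 p2] uu_nonneg[OF g0 g1 p2])
  also have "(\<Sum>m\<in>{p..<n}. (uu \<gamma> p m)\<^sup>2) \<le> (\<Sum>m\<in>{p..<n}. ww \<gamma> (p - 1) * uu \<gamma> p m)"
  proof (intro sum_mono)
    fix m assume m: "m \<in> {p..<n}"
    have "uu \<gamma> p m \<le> uu \<gamma> p (p - 1)" using m by (intro uu_antimono[OF g0 g1 p2]) auto
    also have "\<dots> \<le> ww \<gamma> (p - 1)" by (rule uu_le_ww[OF g0 g1 p2])
    finally have "uu \<gamma> p m * uu \<gamma> p m \<le> ww \<gamma> (p - 1) * uu \<gamma> p m"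
      using uu_nonneg[OF g0 g1 p2] by (intro mult_right_mono) auto
    thus "(uu \<gamma> p m)\<^sup>2 \<le> ww \<gamma> (p - 1) * uu \<gamma> p m" by (simp add: power2_eq_square)
  qed
  also have "\<dots> = ww \<gamma> (p - 1) * (\<Sum>m\<in>{p..<n}. uu \<gamma> p m)" by (simp add: sum_distrib_left)
  also have "\<dots> \<le> ww \<gamma> (p - 1) * (\<Sum>m<n. uu \<gamma> p m)"
    using ww_pos[OF g0 g1] uu_nonneg[OF g0 g1 p2]
    by (intro mult_left_mono sum_mono2) (auto intro: less_imp_le)
  also have "\<dots> \<le> ww \<gamma> (p - 1) * (1 / sig \<gamma> p)"
    using ww_pos[OF g0 g1] by (intro mult_left_mono uu_sum_le'[OF g0 g1 p2]) (auto intro: less_imp_le)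
  finally show ?thesis by simp
qed

lemma rmse_sq_bound:
  assumes pn: "p \<le> n" and k: "1 \<le> k" and b: "1 \<le> b"
  shows "(rmse n k b (Bmat n \<gamma> p) (Cmat n \<gamma> p))\<^sup>2 \<le>
    ((\<Sum>d<p. (ss \<gamma> d)\<^sup>2) + real n * (sig \<gamma> p)\<^sup>2) *
    (real k * ((\<Sum>m<p. (ww \<gamma> m)\<^sup>2) + ww \<gamma> (p - 1) / sig \<gamma> p) + 2 * real k / ((sig \<gamma> p)\<^sup>2 * real b))"
proof -
  have p0: "0 < p" using p2 by simp
  have n0: "0 < n" using pn p2 by simp
  define Q where "Q = (\<Sum>d<n. (sp \<gamma> p d)\<^sup>2)"
  define u where "u = uu \<gamma> p"
  define U where "U = (\<Sum>m<n. u m)"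
  define S where "S = (\<Sum>i<n. (\<Sum>j<k. if j * b \<le> i then u (i - j * b) else 0)\<^sup>2)"
  have Q0: "0 \<le> Q" unfolding Q_def by (simp add: sum_nonneg)
  have frob2: "(frob n (Bmat n \<gamma> p))\<^sup>2 \<le> real n * Q"
  proof -
    have "(frob n (Bmat n \<gamma> p))\<^sup>2 = (\<Sum>i<n. \<Sum>j<n. (Bmat n \<gamma> p i j)\<^sup>2)"
      unfolding frob_def by (simp add: sum_nonneg)
    also have "\<dots> \<le> (\<Sum>i<n. Q)"
    proof (intro sum_mono)
      fix i assume i: "i \<in> {..<n}"
      have "(\<Sum>j<n. (Bmat n \<gamma> p i j)\<^sup>2) = (\<Sum>j\<in>{j\<in>{..<n}. j \<le> i}. (sp \<gamma> p (i - j))\<^sup>2)"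
        using i by (subst sum.inter_filter) (auto intro!: sum.cong simp: Bmat_eq[OF p0])
      also have "\<dots> \<le> Q" unfolding Q_def using i by (intro sum_inj_le) (auto simp: inj_on_def)
      finally show "(\<Sum>j<n. (Bmat n \<gamma> p i j)\<^sup>2) \<le> Q" .
    qed
    finally show ?thesis by simp
  qed
  have sens2: "(sens n k b (Cmat n \<gamma> p))\<^sup>2 = S"
  proof -
    have "(sens n k b (Cmat n \<gamma> p))\<^sup>2 = (\<Sum>i<n. (\<Sum>j<k. Cmat n \<gamma> p i (j * b))\<^sup>2)"
      unfolding sens_def by (simp add: sum_nonneg)
    also have "\<dots> = S" unfolding S_def
      by (intro sum.cong refl arg_cong[of _ _ "\<lambda>x. x\<^sup>2"]) (auto simp: Cmat_eq[OF p0] Cm_def u_def)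
    finally show ?thesis .
  qed
  have S0: "0 \<le> S" unfolding S_def by (simp add: sum_nonneg)
  have Sb: "S \<le> real k * (\<Sum>m<n. (u m)\<^sup>2) + 2 * real k * U\<^sup>2 / real b"
    unfolding S_def U_def u_def
    by (rule sens_bound[OF uu_nonneg[OF g0 g1 p2] uu_antimono[OF g0 g1 p2] b k])
  have sig0: "0 < sig \<gamma> p" by (rule sig_pos[OF g0 g1 p2])
  have U0: "0 \<le> U" unfolding U_def u_def using uu_nonneg[OF g0 g1 p2] by (simp add: sum_nonneg)
  have UU: "U\<^sup>2 \<le> 1 / (sig \<gamma> p)\<^sup>2"
  proof -
    have "U \<le> 1 / sig \<gamma> p" unfolding U_def u_def by (rule uu_sum_le'[OF g0 g1 p2])
    hence "U\<^sup>2 \<le> (1 / sig \<gamma> p)\<^sup>2" using U0 by (intro power_mono) auto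
    thus ?thesis by (simp add: power_divide)
  qed
  have S2: "S \<le> real k * ((\<Sum>m<p. (ww \<gamma> m)\<^sup>2) + ww \<gamma> (p - 1) / sig \<gamma> p) + 2 * real k / ((sig \<gamma> p)\<^sup>2 * real b)"
  proof -
    have "real k * (\<Sum>m<n. (u m)\<^sup>2) \<le> real k * ((\<Sum>m<p. (ww \<gamma> m)\<^sup>2) + ww \<gamma> (p - 1) / sig \<gamma> p)"
      unfolding u_def by (intro mult_left_mono N2_bound pn) auto
    moreover have "2 * real k * U\<^sup>2 / real b \<le> 2 * real k * (1 / (sig \<gamma> p)\<^sup>2) / real b"
      using UU b by (intro divide_right_mono mult_left_mono) auto
    ultimately show ?thesis using Sb by (simp add: field_simps)
  qed
  have "(rmse n k b (Bmat n \<gamma> p) (Cmat n \<gamma> p))\<^sup>2 = (frob n (Bmat n \<gamma> p))\<^sup>2 * S / real n"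
    unfolding rmse_def using n0 by (simp add: power_divide power_mult_distrib sens2)
  also have "\<dots> \<le> (real n * Q) * S / real n"
    using frob2 S0 n0 by (intro divide_right_mono mult_right_mono) auto
  also have "\<dots> = Q * S" using n0 by simp
  also have "\<dots> \<le> ((\<Sum>d<p. (ss \<gamma> d)\<^sup>2) + real n * (sig \<gamma> p)\<^sup>2) *
    (real k * ((\<Sum>m<p. (ww \<gamma> m)\<^sup>2) + ww \<gamma> (p - 1) / sig \<gamma> p) + 2 * real k / ((sig \<gamma> p)\<^sup>2 * real b))"
    using Q_bound[OF pn] S2 Q0 S0 unfolding Q_def by (intro mult_mono) auto
  finally show ?thesis .
qed

end

lemma R_expand:
  fixes P H W \<sigma> n k b :: real
  assumes "\<sigma> > 0" "b > 0"
  shows "(P + n * \<sigma>\<^sup>2) * (k * (H + W / \<sigma>) + 2 * k / (\<sigma>\<^sup>2 * b)) =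
    P * k * H + P * k * (W / \<sigma>) + 2 * P * k * (1 / \<sigma>)\<^sup>2 / b + n * \<sigma>\<^sup>2 * k * H + n * k * \<sigma> * W + 2 * n * k / b"
  using assms by (simp add: field_simps power2_eq_square)

lemma case1_arith:
  fixes \<gamma> p n k b a P H W \<sigma> :: real
  defines "\<delta> \<equiv> 1/2 - \<gamma>"
  assumes g0: "0 < \<gamma>" and g1: "\<gamma> < 1/2" and p: "2 \<le> p" and n: "0 \<le> n" and k: "1 \<le> k" and b: "1 \<le> b"
    and a: "0 < a" "a\<^sup>2 \<le> p" and s: "0 < \<sigma>" "\<sigma> \<le> 1 / a" "1 / \<sigma> \<le> 6 * a"
    and W: "0 \<le> W" "W \<le> 3 * \<gamma> * a / p" and P: "0 \<le> P" "P \<le> (p / a\<^sup>2) / (2 * \<delta>)"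
    and H: "0 \<le> H" "H \<le> 9 / 2 / \<delta>"
  shows "(P + n * \<sigma>\<^sup>2) * (k * (H + W / \<sigma>) + 2 * k / (\<sigma>\<^sup>2 * b)) \<le>
    400 * (k * (p / a\<^sup>2) / \<delta>\<^sup>2 + n * k / (\<gamma>\<^sup>2 * b) + k * p / (\<gamma> * \<delta> * b) + n * k / (a\<^sup>2 * \<delta>))"
proof -
  have d0: "0 < \<delta>" "\<delta> \<le> 1/2" using g0 g1 by (auto simp: \<delta>_def)
  have pa: "1 \<le> p / a\<^sup>2" using a by simp
  define T1 where "T1 = k * (p / a\<^sup>2) / \<delta>\<^sup>2"
  define T2 where "T2 = n * k / (\<gamma>\<^sup>2 * b)"
  define T3 where "T3 = k * p / (\<gamma> * \<delta> * b)"
  define T4 where "T4 = n * k / (a\<^sup>2 * \<delta>)"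
  have T0: "0 \<le> T1" "0 \<le> T2" "0 \<le> T3" "0 \<le> T4" using d0 a k b n p g0 by (auto simp: T1_def T2_def T3_def T4_def)
  have kd: "k / \<delta> \<le> T1"
  proof -
    have "k / \<delta> \<le> k / \<delta>\<^sup>2" using d0 k by (intro divide_left_mono) (auto simp: power2_eq_square mult_le_cancel_left1)
    also have "\<dots> \<le> k * (p / a\<^sup>2) / \<delta>\<^sup>2"
    proof -
      have "k * 1 \<le> k * (p / a\<^sup>2)" using pa k by (intro mult_left_mono) auto
      thus ?thesis using d0 by (intro divide_right_mono) auto
    qed
    finally show ?thesis by (simp add: T1_def)
  qed
  have E1: "P * k * H \<le> 9/4 * T1"
  proof -
    have "P * k * H \<le> ((p / a\<^sup>2) / (2 * \<delta>)) * k * (9 / 2 / \<delta>)"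
      using P H k p a d0 by (intro mult_mono) auto
    also have "\<dots> = 9/4 * T1" using d0 by (simp add: T1_def field_simps power2_eq_square)
    finally show ?thesis .
  qed
  have Ws: "W / \<sigma> \<le> 18 * \<gamma> * a\<^sup>2 / p"
  proof -
    have "W / \<sigma> = W * (1 / \<sigma>)" by simp
    also have "\<dots> \<le> (3 * \<gamma> * a / p) * (6 * a)" using W s by (intro mult_mono) auto
    also have "\<dots> = 18 * \<gamma> * a\<^sup>2 / p" by (simp add: power2_eq_square)
    finally show ?thesis .
  qed
  have E2: "P * k * (W / \<sigma>) \<le> 9 * T1"
  proof -
    have "P * k * (W / \<sigma>) \<le> ((p / a\<^sup>2) / (2 * \<delta>)) * k * (18 * \<gamma> * a\<^sup>2 / p)"
      using P k Ws W s p a d0 by (intro mult_mono) auto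
    also have "\<dots> = 9 * \<gamma> * (k / \<delta>)" using d0 a p by (simp add: field_simps power2_eq_square)
    also have "\<dots> \<le> 9 * 1 * (k / \<delta>)" using g0 g1 k d0 by (intro mult_right_mono mult_left_mono) auto
    also have "\<dots> \<le> 9 * T1" using kd by simp
    finally show ?thesis .
  qed
  have E3: "2 * P * k * (1 / \<sigma>)\<^sup>2 / b \<le> 36 * T3"
  proof -
    have s2: "(1 / \<sigma>)\<^sup>2 \<le> (6 * a)\<^sup>2" using s by (intro power_mono) auto
    have "2 * P * k * (1 / \<sigma>)\<^sup>2 / b \<le> 2 * ((p / a\<^sup>2) / (2 * \<delta>)) * k * (6 * a)\<^sup>2 / b"
      using P k s2 b p a d0 by (intro divide_right_mono mult_mono) auto
    also have "\<dots> = 36 * (k * p / (\<delta> * b))" using d0 a b by (simp add: field_simps power2_eq_square)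
    also have "\<dots> \<le> 36 * T3" unfolding T3_def using g0 g1 k p b d0
      by (intro mult_left_mono divide_left_mono) (auto simp: mult_le_cancel_right1)
    finally show ?thesis .
  qed
  have E4: "n * \<sigma>\<^sup>2 * k * H \<le> 9/2 * T4"
  proof -
    have s2: "\<sigma>\<^sup>2 \<le> (1 / a)\<^sup>2" using s by (intro power_mono) auto
    have "n * \<sigma>\<^sup>2 * k * H \<le> n * (1 / a)\<^sup>2 * k * (9 / 2 / \<delta>)"
      using n s2 k H p a d0 by (intro mult_mono) auto
    also have "\<dots> = 9/2 * T4" using d0 a by (simp add: T4_def field_simps power2_eq_square)
    finally show ?thesis .
  qed
  have E5: "n * k * \<sigma> * W \<le> 3 * T4"
  proof -
    have "n * k * \<sigma> * W \<le> n * k * (1 / a) * (3 * \<gamma> * a / p)"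
      using n k s W p a d0 g0 by (intro mult_mono) auto
    also have "\<dots> = 3 * \<gamma> * (n * k / p)" using a p by (simp add: field_simps)
    also have "\<dots> \<le> 3 * 1 * (n * k / p)" using g0 g1 n k p by (intro mult_right_mono mult_left_mono) auto
    also have "\<dots> \<le> 3 * T4" unfolding T4_def
    proof -
      have "a\<^sup>2 * \<delta> \<le> p * 1" using a d0 p by (intro mult_mono) auto
      hence "n * k / p \<le> n * k / (a\<^sup>2 * \<delta>)" using n k a d0 p by (intro divide_left_mono) (auto intro!: mult_pos_pos)
      thus "3 * 1 * (n * k / p) \<le> 3 * (n * k / (a\<^sup>2 * \<delta>))" by simp
    qed
    finally show ?thesis .
  qed
  have E6: "2 * n * k / b \<le> 2 * T2"
  proof -
    have "\<gamma>\<^sup>2 * b \<le> 1 * b" using g0 g1 b by (intro mult_right_mono) (auto simp: power2_eq_square mult_le_one)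
    hence "n * k / b \<le> n * k / (\<gamma>\<^sup>2 * b)" using n k b g0 by (intro divide_left_mono) auto
    thus ?thesis by (simp add: T2_def)
  qed
  have "(P + n * \<sigma>\<^sup>2) * (k * (H + W / \<sigma>) + 2 * k / (\<sigma>\<^sup>2 * b)) \<le> 9/4 * T1 + 9 * T1 + 36 * T3 + 9/2 * T4 + 3 * T4 + 2 * T2"
    using R_expand[OF s(1), of b P n k H W] b E1 E2 E3 E4 E5 E6 by linarith
  also have "\<dots> \<le> 400 * (T1 + T2 + T3 + T4)" using T0 by simp
  finally show ?thesis unfolding T1_def T2_def T3_def T4_def .
qed


lemma case2_arith:
  fixes p n k b a L P H W \<sigma> :: real
  assumes p: "2 \<le> p" and n: "0 \<le> n" and k: "1 \<le> k" and b: "1 \<le> b" and L: "1/2 \<le> L"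
    and a: "0 < a" "a\<^sup>2 = p" and s: "0 < \<sigma>" "\<sigma> \<le> 1 / a" "1 / \<sigma> \<le> 6 * a"
    and W: "0 \<le> W" "W \<le> 3/2 * a / p" and P: "0 \<le> P" "P \<le> 3 * L"
    and H: "0 \<le> H" "H \<le> 8 * L"
  shows "(P + n * \<sigma>\<^sup>2) * (k * (H + W / \<sigma>) + 2 * k / (\<sigma>\<^sup>2 * b)) \<le>
    400 * (k * L\<^sup>2 + n * k / b + k * p * L / b + n * k * L / p)"
proof -
  define T1 where "T1 = k * L\<^sup>2"
  define T2 where "T2 = n * k / b"
  define T3 where "T3 = k * p * L / b"
  define T4 where "T4 = n * k * L / p"
  have L0: "0 < L" using L by simp
  have T0: "0 \<le> T1" "0 \<le> T2" "0 \<le> T3" "0 \<le> T4" using L0 k b n p by (auto simp: T1_def T2_def T3_def T4_def)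
  have E1: "P * k * H \<le> 24 * T1"
  proof -
    have "P * k * H \<le> (3 * L) * k * (8 * L)" using P H k L0 by (intro mult_mono) auto
    also have "\<dots> = 24 * T1" by (simp add: T1_def power2_eq_square)
    finally show ?thesis .
  qed
  have Ws: "W / \<sigma> \<le> 9"
  proof -
    have "W / \<sigma> = W * (1 / \<sigma>)" by simp
    also have "\<dots> \<le> (3/2 * a / p) * (6 * a)" using W s a p by (intro mult_mono) auto
    also have "\<dots> = 9" using a p by (simp add: power2_eq_square field_simps)
    finally show ?thesis .
  qed
  have E2: "P * k * (W / \<sigma>) \<le> 54 * T1"
  proof -
    have "P * k * (W / \<sigma>) \<le> (3 * L) * k * 9" using P k Ws W s L0 by (intro mult_mono) auto
    also have "\<dots> = 27 * (k * L)" by simp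
    also have "\<dots> \<le> 27 * (k * (2 * L\<^sup>2))"
    proof -
      have "L * 1 \<le> L * (2 * L)" using L L0 by (intro mult_left_mono) auto
      thus ?thesis using k by (intro mult_left_mono) (auto simp: power2_eq_square)
    qed
    also have "\<dots> = 54 * T1" by (simp add: T1_def)
    finally show ?thesis .
  qed
  have E3: "2 * P * k * (1 / \<sigma>)\<^sup>2 / b \<le> 216 * T3"
  proof -
    have s2: "(1 / \<sigma>)\<^sup>2 \<le> (6 * a)\<^sup>2" using s by (intro power_mono) auto
    have "2 * P * k * (1 / \<sigma>)\<^sup>2 / b \<le> 2 * (3 * L) * k * (6 * a)\<^sup>2 / b"
      using P k s2 b L0 by (intro divide_right_mono mult_mono) auto
    also have "\<dots> = 216 * T3" using a b by (simp add: T3_def field_simps power2_eq_square)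
    finally show ?thesis .
  qed
  have E4: "n * \<sigma>\<^sup>2 * k * H \<le> 8 * T4"
  proof -
    have s2: "\<sigma>\<^sup>2 \<le> (1 / a)\<^sup>2" using s by (intro power_mono) auto
    have "n * \<sigma>\<^sup>2 * k * H \<le> n * (1 / a)\<^sup>2 * k * (8 * L)"
      using n s2 k H L0 by (intro mult_mono) auto
    also have "\<dots> = 8 * T4" using a p by (simp add: T4_def field_simps power2_eq_square)
    finally show ?thesis .
  qed
  have E5: "n * k * \<sigma> * W \<le> 3 * T4"
  proof -
    have "n * k * \<sigma> * W \<le> n * k * (1 / a) * (3/2 * a / p)"
      using n k s W a p by (intro mult_mono) auto
    also have "\<dots> = 3/2 * (n * k / p)" using a p by (simp add: field_simps)
    also have "\<dots> \<le> 3/2 * (n * k * (2 * L) / p)"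
    proof -
      have "n * k * 1 \<le> n * k * (2 * L)" using n k L by (intro mult_left_mono) auto
      thus ?thesis using p by (intro mult_left_mono divide_right_mono) auto
    qed
    also have "\<dots> = 3 * T4" by (simp add: T4_def)
    finally show ?thesis .
  qed
  have E6: "2 * n * k / b \<le> 2 * T2" by (simp add: T2_def)
  have "(P + n * \<sigma>\<^sup>2) * (k * (H + W / \<sigma>) + 2 * k / (\<sigma>\<^sup>2 * b)) \<le> 24 * T1 + 54 * T1 + 216 * T3 + 8 * T4 + 3 * T4 + 2 * T2"
    using R_expand[OF s(1), of b P n k H W] b E1 E2 E3 E4 E5 E6 by linarith
  also have "\<dots> \<le> 400 * (T1 + T2 + T3 + T4)" using T0 by simp
  finally show ?thesis unfolding T1_def T2_def T3_def T4_def .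
qed

lemma case3_arith:
  fixes \<gamma> p n k b a P H W \<sigma> :: real
  defines "\<delta> \<equiv> \<gamma> - 1/2" and "\<epsilon> \<equiv> 1 - \<gamma>"
  assumes g0: "1/2 < \<gamma>" and g1: "\<gamma> < 1" and p: "2 \<le> p" and n: "0 \<le> n" and k: "1 \<le> k" and b: "1 \<le> b"
    and a: "0 < a" and s: "0 < \<sigma>" "\<sigma> \<le> 3 * \<epsilon> / a" "1 / \<sigma> \<le> 3 * a / \<epsilon>"
    and W: "0 \<le> W" "W \<le> 3 * a / p" and P: "0 \<le> P" "P \<le> 1 / \<delta>"
    and H: "0 \<le> H" "H \<le> 9 / 2 * (a\<^sup>2 / p) / \<delta>"
  shows "(P + n * \<sigma>\<^sup>2) * (k * (H + W / \<sigma>) + 2 * k / (\<sigma>\<^sup>2 * b)) \<le>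
    400 * (k * (a\<^sup>2 / p) / (\<delta>\<^sup>2 * \<epsilon>) + n * k / b + k * a\<^sup>2 / (\<epsilon>\<^sup>2 * \<delta> * b) + \<epsilon> * n * k / (\<delta> * p))"
proof -
  have d0: "0 < \<delta>" "\<delta> \<le> 1/2" using g0 g1 by (auto simp: \<delta>_def)
  have e0: "0 < \<epsilon>" "\<epsilon> \<le> 1/2" using g0 g1 by (auto simp: \<epsilon>_def)
  define T1 where "T1 = k * (a\<^sup>2 / p) / (\<delta>\<^sup>2 * \<epsilon>)"
  define T2 where "T2 = n * k / b"
  define T3 where "T3 = k * a\<^sup>2 / (\<epsilon>\<^sup>2 * \<delta> * b)"
  define T4 where "T4 = \<epsilon> * n * k / (\<delta> * p)"
  have T0: "0 \<le> T1" "0 \<le> T2" "0 \<le> T3" "0 \<le> T4" using d0 e0 a k b n p by (auto simp: T1_def T2_def T3_def T4_def)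
  have E1: "P * k * H \<le> 9/2 * T1"
  proof -
    have "P * k * H \<le> (1 / \<delta>) * k * (9 / 2 * (a\<^sup>2 / p) / \<delta>)" using P H k d0 a p by (intro mult_mono) auto
    also have "\<dots> = 9/2 * (k * (a\<^sup>2 / p) / (\<delta>\<^sup>2 * 1))" using d0 by (simp add: field_simps power2_eq_square)
    also have "\<dots> \<le> 9/2 * T1" unfolding T1_def using e0 d0 k a p
      by (intro mult_left_mono divide_left_mono mult_left_mono) auto
    finally show ?thesis .
  qed
  have Ws: "W / \<sigma> \<le> 9 * a\<^sup>2 / (p * \<epsilon>)"
  proof -
    have "W / \<sigma> = W * (1 / \<sigma>)" by simp
    also have "\<dots> \<le> (3 * a / p) * (3 * a / \<epsilon>)" using W s a p e0 by (intro mult_mono) auto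
    also have "\<dots> = 9 * a\<^sup>2 / (p * \<epsilon>)" by (simp add: power2_eq_square)
    finally show ?thesis .
  qed
  have E2: "P * k * (W / \<sigma>) \<le> 9 * T1"
  proof -
    have "P * k * (W / \<sigma>) \<le> (1 / \<delta>) * k * (9 * a\<^sup>2 / (p * \<epsilon>))" using P k Ws W s d0 a p e0 by (intro mult_mono) auto
    also have "\<dots> = 9 * (k * (a\<^sup>2 / p) / (\<delta> * \<epsilon>))" using d0 e0 p by (simp add: field_simps)
    also have "\<dots> \<le> 9 * T1" unfolding T1_def
    proof -
      have "\<delta>\<^sup>2 * \<epsilon> \<le> \<delta> * \<epsilon>" using d0 e0 by (intro mult_right_mono) (auto simp: power2_eq_square mult_le_cancel_left1)
      hence "k * (a\<^sup>2 / p) / (\<delta> * \<epsilon>) \<le> k * (a\<^sup>2 / p) / (\<delta>\<^sup>2 * \<epsilon>)"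
        using d0 e0 k a p by (intro divide_left_mono) auto
      thus "9 * (k * (a\<^sup>2 / p) / (\<delta> * \<epsilon>)) \<le> 9 * (k * (a\<^sup>2 / p) / (\<delta>\<^sup>2 * \<epsilon>))" by simp
    qed
    finally show ?thesis .
  qed
  have E3: "2 * P * k * (1 / \<sigma>)\<^sup>2 / b \<le> 18 * T3"
  proof -
    have s2: "(1 / \<sigma>)\<^sup>2 \<le> (3 * a / \<epsilon>)\<^sup>2" using s by (intro power_mono) auto
    have "2 * P * k * (1 / \<sigma>)\<^sup>2 / b \<le> 2 * (1 / \<delta>) * k * (3 * a / \<epsilon>)\<^sup>2 / b"
      using P k s2 b d0 by (intro divide_right_mono mult_mono) auto
    also have "\<dots> = 18 * T3" using d0 e0 b by (simp add: T3_def field_simps power2_eq_square)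
    finally show ?thesis .
  qed
  have E4: "n * \<sigma>\<^sup>2 * k * H \<le> 81/2 * T4"
  proof -
    have s2: "\<sigma>\<^sup>2 \<le> (3 * \<epsilon> / a)\<^sup>2" using s by (intro power_mono) auto
    have "n * \<sigma>\<^sup>2 * k * H \<le> n * (3 * \<epsilon> / a)\<^sup>2 * k * (9 / 2 * (a\<^sup>2 / p) / \<delta>)"
      using n s2 k H d0 a p by (intro mult_mono) auto
    also have "\<dots> = 81/2 * (\<epsilon> * (\<epsilon> * n * k / (\<delta> * p)))" using a p d0 by (simp add: field_simps power2_eq_square)
    also have "\<dots> \<le> 81/2 * (1 * (\<epsilon> * n * k / (\<delta> * p)))" using e0 n k d0 p
      by (intro mult_left_mono mult_right_mono) auto
    also have "\<dots> = 81/2 * T4" by (simp add: T4_def)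
    finally show ?thesis .
  qed
  have E5: "n * k * \<sigma> * W \<le> 9 * T4"
  proof -
    have "n * k * \<sigma> * W \<le> n * k * (3 * \<epsilon> / a) * (3 * a / p)"
      using n k s W a p e0 by (intro mult_mono) auto
    also have "\<dots> = 9 * (\<epsilon> * n * k / (\<delta> * p)) * \<delta>" using a p d0 by (simp add: field_simps)
    also have "\<dots> \<le> 9 * (\<epsilon> * n * k / (\<delta> * p)) * 1" using d0 e0 n k p
      by (intro mult_left_mono) auto
    also have "\<dots> = 9 * T4" by (simp add: T4_def)
    finally show ?thesis .
  qed
  have E6: "2 * n * k / b \<le> 2 * T2" by (simp add: T2_def)
  have "(P + n * \<sigma>\<^sup>2) * (k * (H + W / \<sigma>) + 2 * k / (\<sigma>\<^sup>2 * b)) \<le> 9/2 * T1 + 9 * T1 + 18 * T3 + 81/2 * T4 + 9 * T4 + 2 * T2"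
    using R_expand[OF s(1), of b P n k H W] b E1 E2 E3 E4 E5 E6 by linarith
  also have "\<dots> \<le> 400 * (T1 + T2 + T3 + T4)" using T0 by simp
  finally show ?thesis unfolding T1_def T2_def T3_def T4_def .
qed


lemma pw_sq: "0 < x \<Longrightarrow> (x powr y)\<^sup>2 = x powr (2 * y)" for x y :: real
  by (simp add: power2_eq_square powr_add[symmetric])

lemma pw_m1: "0 < x \<Longrightarrow> x powr (y - 1) = x powr y / x" for x y :: real
  by (simp add: powr_diff)

lemma pw_1m: "0 < x \<Longrightarrow> x powr (1 - y) = x / x powr y" for x y :: real
  by (simp add: powr_diff)

lemma inv_bound: "0 < c \<Longrightarrow> 0 < a \<Longrightarrow> c / a \<le> \<sigma> \<Longrightarrow> 1 / \<sigma> \<le> a / c" for a c \<sigma> :: real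
proof -
  assume c: "0 < c" and a: "0 < a" and s: "c / a \<le> \<sigma>"
  have "0 < c / a" using a c by simp
  moreover have "0 < \<sigma>" using \<open>0 < c / a\<close> s by linarith
  ultimately have "1 / \<sigma> \<le> 1 / (c / a)" using s mult_pos_pos[of \<sigma> "c / a"] by (intro divide_left_mono) auto
  thus ?thesis by simp
qed

context
  fixes \<gamma> :: real and p :: nat
  assumes g0: "0 < \<gamma>" and g1: "\<gamma> < 1" and p2: "2 \<le> p"
begin

lemma sig_up: "sig \<gamma> p \<le> real p powr (- \<gamma>)"
  using ss_up[OF g0 g1, of "p - 1"] p2 unfolding sig_def by (simp add: of_nat_diff)

lemma sig_up1: "sig \<gamma> p \<le> (1 - \<gamma>) * exp 1 * real p powr (- \<gamma>)"
  using ss_up1[OF g0 g1, of "p - 1"] p2 unfolding sig_def by (simp add: of_nat_diff)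

lemma sig_low: "(1 - \<gamma>) * exp (- 1) * real p powr (- \<gamma>) \<le> sig \<gamma> p"
proof -
  have "real p powr (- \<gamma>) \<le> real (p - 1) powr (- \<gamma>)" using p2 g0 by (intro powr_mono2') auto
  hence "(1 - \<gamma>) * exp (- 1) * real p powr (- \<gamma>) \<le> (1 - \<gamma>) * exp (- 1) * real (p - 1) powr (- \<gamma>)"
    using g1 by (intro mult_left_mono) auto
  also have "\<dots> \<le> sig \<gamma> p" unfolding sig_def using p2 by (intro ss_low[OF g0 g1]) auto
  finally show ?thesis .
qed

lemma W_up: "ww \<gamma> (p - 1) \<le> \<gamma> * exp 1 * real p powr (\<gamma> - 1)"
  using ww_up[OF g0 g1, of "p - 1"] p2 by (simp add: of_nat_diff)

lemma P_up: "(\<Sum>d<p. (ss \<gamma> d)\<^sup>2) \<le> (\<Sum>j\<in>{1..p}. real j powr (- 2 * \<gamma>))"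
proof -
  have "(\<Sum>d<p. (ss \<gamma> d)\<^sup>2) \<le> (\<Sum>d<p. real (Suc d) powr (- 2 * \<gamma>))"
  proof (intro sum_mono)
    fix d
    have "(ss \<gamma> d)\<^sup>2 \<le> (real (d + 1) powr (- \<gamma>))\<^sup>2"
      using ss_up[OF g0 g1, of d] ss_pos[OF g0 g1, of d] by (intro power_mono) auto
    also have "\<dots> = real (Suc d) powr (- 2 * \<gamma>)" by (subst pw_sq) auto
    finally show "(ss \<gamma> d)\<^sup>2 \<le> real (Suc d) powr (- 2 * \<gamma>)" .
  qed
  also have "\<dots> = (\<Sum>j\<in>{1..p}. real j powr (- 2 * \<gamma>))"
    using sum.atLeast1_atMost_eq[of "\<lambda>j. real j powr (- 2 * \<gamma>)" p] by simp
  finally show ?thesis .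
qed

lemma H_up: "(\<Sum>m<p. (ww \<gamma> m)\<^sup>2) \<le> 1 + (\<gamma> * exp 1)\<^sup>2 * (\<Sum>j\<in>{2..p}. real j powr (2 * \<gamma> - 2))"
proof -
  have "{..<p} = insert 0 {1..<p}" using p2 by auto
  hence "(\<Sum>m<p. (ww \<gamma> m)\<^sup>2) = 1 + (\<Sum>m\<in>{1..<p}. (ww \<gamma> m)\<^sup>2)" by simp
  also have "(\<Sum>m\<in>{1..<p}. (ww \<gamma> m)\<^sup>2) \<le> (\<Sum>m\<in>{1..<p}. (\<gamma> * exp 1)\<^sup>2 * real (Suc m) powr (2 * \<gamma> - 2))"
  proof (intro sum_mono)
    fix m assume m: "m \<in> {1..<p}"
    have "(ww \<gamma> m)\<^sup>2 \<le> (\<gamma> * exp 1 * real (m + 1) powr (\<gamma> - 1))\<^sup>2"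
      using ww_up[OF g0 g1, of m] ww_pos[OF g0 g1, of m] m by (intro power_mono) auto
    also have "\<dots> = (\<gamma> * exp 1)\<^sup>2 * (real (m + 1) powr (\<gamma> - 1))\<^sup>2" by (simp add: power_mult_distrib)
    also have "(real (m + 1) powr (\<gamma> - 1))\<^sup>2 = real (Suc m) powr (2 * \<gamma> - 2)" by (subst pw_sq) (auto simp: algebra_simps)
    finally show "(ww \<gamma> m)\<^sup>2 \<le> (\<gamma> * exp 1)\<^sup>2 * real (Suc m) powr (2 * \<gamma> - 2)" .
  qed
  also have "\<dots> = (\<gamma> * exp 1)\<^sup>2 * (\<Sum>j\<in>{2..p}. real j powr (2 * \<gamma> - 2))"
  proof -
    have B: "{Suc 1..<Suc p} = {2..p}" by auto
    have "(\<Sum>j\<in>{2..p}. real j powr (2 * \<gamma> - 2)) = (\<Sum>m\<in>{1..<p}. real (Suc m) powr (2 * \<gamma> - 2))"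
      by (subst B[symmetric]) (rule sum.shift_bounds_Suc_ivl)
    thus ?thesis by (simp only: sum_distrib_left)
  qed
  finally show ?thesis by simp
qed

end

lemma fin:
  fixes r T1 T2 T3 T4 :: real
  assumes "0 \<le> r" "0 \<le> T1" "0 \<le> T2" "0 \<le> T3" "0 \<le> T4"
    and "r\<^sup>2 \<le> 400 * (T1\<^sup>2 + T2\<^sup>2 + T3\<^sup>2 + T4\<^sup>2)"
  shows "r \<le> 20 * (T1 + T2 + T3 + T4)"
proof -
  have ex: "(T1 + T2 + T3 + T4)\<^sup>2 = T1\<^sup>2 + T2\<^sup>2 + T3\<^sup>2 + T4\<^sup>2 + 2 * (T1*T2 + T1*T3 + T1*T4 + T2*T3 + T2*T4 + T3*T4)"
    by (simp add: power2_eq_square algebra_simps)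
  have "0 \<le> T1*T2 + T1*T3 + T1*T4 + T2*T3 + T2*T4 + T3*T4"
    using assms(2-5) by (intro add_nonneg_nonneg mult_nonneg_nonneg) auto
  hence "T1\<^sup>2 + T2\<^sup>2 + T3\<^sup>2 + T4\<^sup>2 \<le> (T1 + T2 + T3 + T4)\<^sup>2" unfolding ex le_add_same_cancel1 by simp
  hence "400 * (T1\<^sup>2 + T2\<^sup>2 + T3\<^sup>2 + T4\<^sup>2) \<le> 400 * (T1 + T2 + T3 + T4)\<^sup>2" by simp
  also have "\<dots> = (20 * (T1 + T2 + T3 + T4))\<^sup>2"
  proof -
    have "400 * x\<^sup>2 = (20 * x)\<^sup>2" for x :: real by (simp add: power2_eq_square)
    from this[of "T1 + T2 + T3 + T4"] show ?thesis .
  qed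
  finally have "r\<^sup>2 \<le> (20 * (T1 + T2 + T3 + T4))\<^sup>2" using assms(6) by linarith
  moreover have "0 \<le> 20 * (T1 + T2 + T3 + T4)" using assms(2-5) by simp
  ultimately show ?thesis by (rule power2_le_imp_le)
qed

lemma rmse_nonneg: "0 \<le> rmse n k b B C"
  unfolding rmse_def frob_def sens_def by (simp add: sum_nonneg)

lemma e_facts: "exp (1::real) \<le> 3" "1/3 \<le> exp (-1::real)" "(exp (1::real))\<^sup>2 \<le> 8"
proof -
  show e3: "exp (1::real) \<le> 3" using exp1_le by simp
  have "exp (-1::real) = 1 / exp 1" by (simp add: exp_minus divide_inverse)
  also have "1 / 3 \<le> 1 / exp (1::real)" using e3 by (intro divide_left_mono) auto
  ultimately show "1/3 \<le> exp (-1::real)" by simp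
  have "(exp (1::real))\<^sup>2 \<le> (272/100)\<^sup>2" using exp1_le by (intro power_mono) auto
  moreover have "(272/100::real)\<^sup>2 \<le> 8" by (simp add: power2_eq_square)
  ultimately show "(exp (1::real))\<^sup>2 \<le> 8" by linarith
qed

lemma sqrt_sq: "0 \<le> x \<Longrightarrow> (sqrt x)\<^sup>2 = x" by simp


lemma case1_main:
  assumes g0: "0 < \<gamma>" and g1: "\<gamma> < 1/2" and p2: "2 \<le> p" and pn: "p \<le> n" and k: "1 \<le> k" and b: "1 \<le> b"
  shows "rmse n k b (Bmat n \<gamma> p) (Cmat n \<gamma> p) \<le> 20 * bound n p k b \<gamma>"
proof -
  have g1': "\<gamma> < 1" using g1 by simp
  define \<sigma> where "\<sigma> = sig \<gamma> p"
  define P where "P = (\<Sum>d<p. (ss \<gamma> d)\<^sup>2)"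
  define H where "H = (\<Sum>m<p. (ww \<gamma> m)\<^sup>2)"
  define W where "W = ww \<gamma> (p - 1)"
  have R: "(rmse n k b (Bmat n \<gamma> p) (Cmat n \<gamma> p))\<^sup>2 \<le>
     (P + real n * \<sigma>\<^sup>2) * (real k * (H + W / \<sigma>) + 2 * real k / (\<sigma>\<^sup>2 * real b))"
    using rmse_sq_bound[OF g0 g1' p2 pn k b] unfolding \<sigma>_def P_def H_def W_def .
  define a where "a = real p powr \<gamma>"
  define \<delta> where "\<delta> = 1/2 - \<gamma>"
  have d0: "0 < \<delta>" "\<delta> \<le> 1/2" using g0 g1 by (auto simp: \<delta>_def)
  have pp: "0 < real p" "2 \<le> real p" using p2 by auto
  have a0: "0 < a" using pp by (simp add: a_def)
  have a2: "a\<^sup>2 = real p powr (2 * \<gamma>)" unfolding a_def using pp(1) by (rule pw_sq)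
  have a2p: "a\<^sup>2 \<le> real p"
  proof -
    have "real p powr (2 * \<gamma>) \<le> real p powr 1" using pp g1 by (intro powr_mono) auto
    thus ?thesis using a2 pp by simp
  qed
  have pneg: "real p powr (- \<gamma>) = 1 / a" by (simp add: a_def powr_minus_divide)
  have s0: "0 < \<sigma>" unfolding \<sigma>_def by (rule sig_pos[OF g0 g1' p2])
  have s1: "\<sigma> \<le> 1 / a" using sig_up[OF g0 g1' p2] pneg by (simp add: \<sigma>_def)
  have s2: "1 / \<sigma> \<le> 6 * a"
  proof -
    define c where "c = (1 - \<gamma>) * exp (- 1)"
    have c6: "1/6 \<le> c"
    proof -
      have "(1/2) * (1/3) \<le> (1 - \<gamma>) * exp (- 1)" using g1 e_facts(2) by (intro mult_mono) auto
      thus ?thesis by (simp add: c_def)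
    qed
    have "c / a \<le> \<sigma>" using sig_low[OF g0 g1' p2] pneg by (simp add: \<sigma>_def c_def)
    hence "1 / \<sigma> \<le> a / c" using c6 a0 by (intro inv_bound) auto
    also have "\<dots> \<le> a / (1/6)" using c6 a0 by (intro divide_left_mono) auto
    finally show ?thesis by simp
  qed
  have W0: "0 \<le> W" unfolding W_def using ww_pos[OF g0 g1'] by (simp add: less_imp_le)
  have W1: "W \<le> 3 * \<gamma> * a / real p"
  proof -
    have "W \<le> \<gamma> * exp 1 * real p powr (\<gamma> - 1)" unfolding W_def by (rule W_up[OF g0 g1' p2])
    also have "\<dots> = \<gamma> * exp 1 * (a / real p)" using pp by (simp add: pw_m1 a_def)
    also have "\<dots> \<le> \<gamma> * 3 * (a / real p)" using e_facts(1) g0 a0 pp by (intro mult_right_mono mult_left_mono) auto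
    also have "\<dots> = 3 * \<gamma> * a / real p" by simp
    finally show ?thesis .
  qed
  have P0: "0 \<le> P" unfolding P_def by (simp add: sum_nonneg)
  have P1: "P \<le> (real p / a\<^sup>2) / (2 * \<delta>)"
  proof -
    have "P \<le> (\<Sum>j\<in>{1..p}. real j powr (- 2 * \<gamma>))" unfolding P_def by (rule P_up[OF g0 g1' p2])
    also have "\<dots> = (\<Sum>j\<in>{1..p}. real j powr ((1 - 2 * \<gamma>) - 1))" by simp
    also have "\<dots> \<le> real p powr (1 - 2 * \<gamma>) / (1 - 2 * \<gamma>)" using g0 g1 by (intro psum_pos) auto
    also have "real p powr (1 - 2 * \<gamma>) = real p / a\<^sup>2" using pp a2 by (simp add: pw_1m)
    also have "1 - 2 * \<gamma> = 2 * \<delta>" by (simp add: \<delta>_def)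
    finally show ?thesis .
  qed
  have H0: "0 \<le> H" unfolding H_def by (simp add: sum_nonneg)
  have H1: "H \<le> 9 / 2 / \<delta>"
  proof -
    define S where "S = (\<Sum>j\<in>{2..p}. real j powr (2 * \<gamma> - 2))"
    have S0: "0 \<le> S" unfolding S_def by (simp add: sum_nonneg)
    have S1: "S \<le> 1 / (2 * \<delta>)"
    proof -
      have "S = (\<Sum>j\<in>{2..p}. real j powr ((2 * \<gamma> - 1) - 1))" unfolding S_def by simp
      also have "\<dots> \<le> 1 / (- (2 * \<gamma> - 1))" using g1 by (intro psum_neg) auto
      also have "- (2 * \<gamma> - 1) = 2 * \<delta>" by (simp add: \<delta>_def)
      finally show ?thesis .
    qed
    have ge: "(\<gamma> * exp 1)\<^sup>2 \<le> 8"
    proof -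
      have "(\<gamma> * exp 1)\<^sup>2 \<le> (1 * exp 1)\<^sup>2" using g0 g1 by (intro power_mono mult_right_mono) auto
      thus ?thesis using e_facts(3) by simp
    qed
    have "H \<le> 1 + (\<gamma> * exp 1)\<^sup>2 * S" unfolding H_def S_def by (rule H_up[OF g0 g1' p2])
    also have "\<dots> \<le> 1 + 8 * (1 / (2 * \<delta>))" using ge S0 S1 by (intro add_left_mono mult_mono) auto
    also have "\<dots> \<le> 9 / 2 / \<delta>"
    proof -
      have "1 \<le> 1 / (2 * \<delta>)" using d0 by (simp add: field_simps)
      hence "1 + 8 * (1 / (2 * \<delta>)) \<le> 9 * (1 / (2 * \<delta>))" by simp
      thus ?thesis by simp
    qed
    finally show ?thesis .
  qed
  have main: "(P + real n * \<sigma>\<^sup>2) * (real k * (H + W / \<sigma>) + 2 * real k / (\<sigma>\<^sup>2 * real b)) \<le>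
    400 * (real k * (real p / a\<^sup>2) / \<delta>\<^sup>2 + real n * real k / (\<gamma>\<^sup>2 * real b) +
           real k * real p / (\<gamma> * \<delta> * real b) + real n * real k / (a\<^sup>2 * \<delta>))"
    unfolding \<delta>_def
    by (rule case1_arith[OF g0 g1 pp(2) _ _ _ a0 a2p s0 s1 s2 W0 W1 P0 P1[unfolded \<delta>_def] H0 H1[unfolded \<delta>_def]])
       (use k b in auto)
  define T1 where "T1 = sqrt (real k) * real p powr (1/2 - \<gamma>) / (1/2 - \<gamma>)"
  define T2 where "T2 = 1 / \<gamma> * sqrt (real n * real k / real b)"
  define T3 where "T3 = sqrt (real k * real p / (\<gamma> * (1/2 - \<gamma>) * real b))"
  define T4 where "T4 = real p powr - \<gamma> * sqrt (real n * real k / (1/2 - \<gamma>))"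
  have bd: "bound n p k b \<gamma> = T1 + T2 + T3 + T4"
    unfolding bound_def T1_def T2_def T3_def T4_def using g1 by simp
  have T0: "0 \<le> T1" "0 \<le> T2" "0 \<le> T3" "0 \<le> T4"
    unfolding T1_def T2_def T3_def T4_def using g0 g1 by auto
  have T1s: "T1\<^sup>2 = real k * (real p / a\<^sup>2) / \<delta>\<^sup>2"
  proof -
    have "(real p powr (1/2 - \<gamma>))\<^sup>2 = real p powr (1 - 2 * \<gamma>)" using pp by (simp add: pw_sq algebra_simps)
    also have "\<dots> = real p / a\<^sup>2" using pp a2 by (simp add: pw_1m)
    finally show ?thesis unfolding T1_def \<delta>_def by (simp add: power_mult_distrib power_divide)
  qed
  have T2s: "T2\<^sup>2 = real n * real k / (\<gamma>\<^sup>2 * real b)"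
    unfolding T2_def by (simp add: power_mult_distrib power_divide)
  have T3s: "T3\<^sup>2 = real k * real p / (\<gamma> * \<delta> * real b)"
    unfolding T3_def \<delta>_def using g0 g1 by simp
  have T4s: "T4\<^sup>2 = real n * real k / (a\<^sup>2 * \<delta>)"
    unfolding T4_def \<delta>_def pneg using g1 by (simp add: power_mult_distrib power_divide)
  show ?thesis unfolding bd
    by (rule fin[OF rmse_nonneg T0]) (unfold T1s T2s T3s T4s, rule order.trans[OF R main])
qed


lemma case2_main:
  assumes g: "\<gamma> = 1/2" and p2: "2 \<le> p" and pn: "p \<le> n" and k: "1 \<le> k" and b: "1 \<le> b"
  shows "rmse n k b (Bmat n \<gamma> p) (Cmat n \<gamma> p) \<le> 20 * bound n p k b \<gamma>"
proof -
  have g0: "0 < \<gamma>" and g1': "\<gamma> < 1" using g by auto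
  define \<sigma> where "\<sigma> = sig \<gamma> p"
  define P where "P = (\<Sum>d<p. (ss \<gamma> d)\<^sup>2)"
  define H where "H = (\<Sum>m<p. (ww \<gamma> m)\<^sup>2)"
  define W where "W = ww \<gamma> (p - 1)"
  have R: "(rmse n k b (Bmat n \<gamma> p) (Cmat n \<gamma> p))\<^sup>2 \<le>
     (P + real n * \<sigma>\<^sup>2) * (real k * (H + W / \<sigma>) + 2 * real k / (\<sigma>\<^sup>2 * real b))"
    using rmse_sq_bound[OF g0 g1' p2 pn k b] unfolding \<sigma>_def P_def H_def W_def .
  define a where "a = sqrt (real p)"
  define L where "L = ln (real p)"
  have pp: "0 < real p" "2 \<le> real p" using p2 by auto
  have a0: "0 < a" using pp by (simp add: a_def)
  have a2: "a\<^sup>2 = real p" using pp by (simp add: a_def)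
  have ph: "real p powr \<gamma> = a" using pp by (simp add: g a_def powr_half_sqrt)
  have pneg: "real p powr (- \<gamma>) = 1 / a" by (simp add: ph powr_minus_divide)
  have L0: "1/2 \<le> L"
  proof -
    have "ln 2 \<le> ln (real p)" using pp by simp
    thus ?thesis using ln2_ge_two_thirds by (simp add: L_def)
  qed
  have s0: "0 < \<sigma>" unfolding \<sigma>_def by (rule sig_pos[OF g0 g1' p2])
  have s1: "\<sigma> \<le> 1 / a" using sig_up[OF g0 g1' p2] pneg by (simp add: \<sigma>_def)
  have s2: "1 / \<sigma> \<le> 6 * a"
  proof -
    define c where "c = (1 - \<gamma>) * exp (- 1)"
    have c6: "1/6 \<le> c"
    proof -
      have "(1/2) * (1/3) \<le> (1 - \<gamma>) * exp (- 1)" using g e_facts(2) by (intro mult_mono) auto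
      thus ?thesis by (simp add: c_def)
    qed
    have "c / a \<le> \<sigma>" using sig_low[OF g0 g1' p2] pneg by (simp add: \<sigma>_def c_def)
    hence "1 / \<sigma> \<le> a / c" using c6 a0 by (intro inv_bound) auto
    also have "\<dots> \<le> a / (1/6)" using c6 a0 by (intro divide_left_mono) auto
    finally show ?thesis by simp
  qed
  have W0: "0 \<le> W" unfolding W_def using ww_pos[OF g0 g1'] by (simp add: less_imp_le)
  have W1: "W \<le> 3/2 * a / real p"
  proof -
    have "W \<le> \<gamma> * exp 1 * real p powr (\<gamma> - 1)" unfolding W_def by (rule W_up[OF g0 g1' p2])
    also have "\<dots> = \<gamma> * exp 1 * (a / real p)" using pp by (simp add: pw_m1 ph)
    also have "\<dots> \<le> \<gamma> * 3 * (a / real p)" using e_facts(1) g0 a0 pp by (intro mult_right_mono mult_left_mono) auto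
    also have "\<dots> = 3/2 * a / real p" by (simp add: g)
    finally show ?thesis .
  qed
  have hs: "(\<Sum>j\<in>{1..p}. real j powr (- 1)) \<le> 1 + L"
  proof -
    have "(\<Sum>j\<in>{1..p}. real j powr (- 1)) = (\<Sum>j\<in>{1..p}. 1 / real j)"
      by (intro sum.cong refl) (auto simp: powr_minus_divide)
    also have "\<dots> \<le> 1 + L" unfolding L_def using p2 by (intro psum_harm) auto
    finally show ?thesis .
  qed
  have P0: "0 \<le> P" unfolding P_def by (simp add: sum_nonneg)
  have P1: "P \<le> 3 * L"
  proof -
    have "P \<le> (\<Sum>j\<in>{1..p}. real j powr (- 2 * \<gamma>))" unfolding P_def by (rule P_up[OF g0 g1' p2])
    also have "\<dots> = (\<Sum>j\<in>{1..p}. real j powr (- 1))" by (simp add: g)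
    also have "\<dots> \<le> 1 + L" by (rule hs)
    also have "\<dots> \<le> 3 * L" using L0 by simp
    finally show ?thesis .
  qed
  have H0: "0 \<le> H" unfolding H_def by (simp add: sum_nonneg)
  have H1: "H \<le> 8 * L"
  proof -
    define S where "S = (\<Sum>j\<in>{2..p}. real j powr (2 * \<gamma> - 2))"
    have S0: "0 \<le> S" unfolding S_def by (simp add: sum_nonneg)
    have S1: "S \<le> 1 + L"
    proof -
      have "S = (\<Sum>j\<in>{2..p}. real j powr (- 1))" unfolding S_def by (simp add: g)
      also have "\<dots> \<le> (\<Sum>j\<in>{1..p}. real j powr (- 1))" by (intro sum_mono2) auto
      also have "\<dots> \<le> 1 + L" by (rule hs)
      finally show ?thesis .
    qed
    have ge: "(\<gamma> * exp 1)\<^sup>2 \<le> 2"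
    proof -
      have "(\<gamma> * exp 1)\<^sup>2 = (exp 1)\<^sup>2 / 4" by (simp add: g power2_eq_square)
      thus ?thesis using e_facts(3) by simp
    qed
    have "H \<le> 1 + (\<gamma> * exp 1)\<^sup>2 * S" unfolding H_def S_def by (rule H_up[OF g0 g1' p2])
    also have "\<dots> \<le> 1 + 2 * (1 + L)" using ge S0 S1 L0 by (intro add_left_mono mult_mono) auto
    also have "\<dots> \<le> 8 * L" using L0 by simp
    finally show ?thesis .
  qed
  have main: "(P + real n * \<sigma>\<^sup>2) * (real k * (H + W / \<sigma>) + 2 * real k / (\<sigma>\<^sup>2 * real b)) \<le>
    400 * (real k * L\<^sup>2 + real n * real k / real b + real k * real p * L / real b + real n * real k * L / real p)"
    by (rule case2_arith[OF pp(2) _ _ _ L0 a0 a2 s0 s1 s2 W0 W1 P0 P1 H0 H1]) (use k b in auto)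
  define T1 where "T1 = sqrt (real k) * ln (real p)"
  define T2 where "T2 = sqrt (real n * real k / real b)"
  define T3 where "T3 = sqrt (real k * real p * ln (real p) / real b)"
  define T4 where "T4 = sqrt (real n * real k * ln (real p) / real p)"
  have bd: "bound n p k b \<gamma> = T1 + T2 + T3 + T4"
    unfolding bound_def T1_def T2_def T3_def T4_def using g by simp
  have Lp: "0 \<le> ln (real p)" using L0 by (simp add: L_def)
  have T0: "0 \<le> T1" "0 \<le> T2" "0 \<le> T3" "0 \<le> T4"
    unfolding T1_def T2_def T3_def T4_def using Lp by auto
  have T1s: "T1\<^sup>2 = real k * L\<^sup>2" unfolding T1_def L_def by (simp add: power_mult_distrib)
  have T2s: "T2\<^sup>2 = real n * real k / real b" unfolding T2_def by simp
  have T3s: "T3\<^sup>2 = real k * real p * L / real b" unfolding T3_def L_def using Lp by simp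
  have T4s: "T4\<^sup>2 = real n * real k * L / real p" unfolding T4_def L_def using Lp by simp
  show ?thesis unfolding bd
    by (rule fin[OF rmse_nonneg T0]) (unfold T1s T2s T3s T4s, rule order.trans[OF R main])
qed

lemma case3_main:
  assumes g0: "1/2 < \<gamma>" and g1: "\<gamma> < 1" and p2: "2 \<le> p" and pn: "p \<le> n" and k: "1 \<le> k" and b: "1 \<le> b"
  shows "rmse n k b (Bmat n \<gamma> p) (Cmat n \<gamma> p) \<le> 20 * bound n p k b \<gamma>"
proof -
  have g0': "0 < \<gamma>" using g0 by simp
  define \<sigma> where "\<sigma> = sig \<gamma> p"
  define P where "P = (\<Sum>d<p. (ss \<gamma> d)\<^sup>2)"
  define H where "H = (\<Sum>m<p. (ww \<gamma> m)\<^sup>2)"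
  define W where "W = ww \<gamma> (p - 1)"
  have R: "(rmse n k b (Bmat n \<gamma> p) (Cmat n \<gamma> p))\<^sup>2 \<le>
     (P + real n * \<sigma>\<^sup>2) * (real k * (H + W / \<sigma>) + 2 * real k / (\<sigma>\<^sup>2 * real b))"
    using rmse_sq_bound[OF g0' g1 p2 pn k b] unfolding \<sigma>_def P_def H_def W_def .
  define a where "a = real p powr \<gamma>"
  define \<delta> where "\<delta> = \<gamma> - 1/2"
  define \<epsilon> where "\<epsilon> = 1 - \<gamma>"
  have d0: "0 < \<delta>" "\<delta> \<le> 1/2" using g0 g1 by (auto simp: \<delta>_def)
  have e0: "0 < \<epsilon>" "\<epsilon> \<le> 1/2" using g0 g1 by (auto simp: \<epsilon>_def)
  have pp: "0 < real p" "2 \<le> real p" using p2 by auto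
  have a0: "0 < a" using pp by (simp add: a_def)
  have a2: "a\<^sup>2 = real p powr (2 * \<gamma>)" unfolding a_def using pp(1) by (rule pw_sq)
  have a2p: "real p \<le> a\<^sup>2"
  proof -
    have "real p powr 1 \<le> real p powr (2 * \<gamma>)" using pp g0 by (intro powr_mono) auto
    thus ?thesis using a2 pp by simp
  qed
  have pneg: "real p powr (- \<gamma>) = 1 / a" by (simp add: a_def powr_minus_divide)
  have s0: "0 < \<sigma>" unfolding \<sigma>_def by (rule sig_pos[OF g0' g1 p2])
  have s1: "\<sigma> \<le> 3 * \<epsilon> / a"
  proof -
    have "\<sigma> \<le> (1 - \<gamma>) * exp 1 * real p powr (- \<gamma>)" unfolding \<sigma>_def by (rule sig_up1[OF g0' g1 p2])
    also have "\<dots> = exp 1 * (\<epsilon> / a)" by (simp add: pneg \<epsilon>_def)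
    also have "\<dots> \<le> 3 * (\<epsilon> / a)" using e_facts(1) e0 a0 by (intro mult_right_mono) auto
    finally show ?thesis by simp
  qed
  have s2: "1 / \<sigma> \<le> 3 * a / \<epsilon>"
  proof -
    define c where "c = (1 - \<gamma>) * exp (- 1)"
    have c6: "\<epsilon> / 3 \<le> c"
    proof -
      have "\<epsilon> * (1/3) \<le> \<epsilon> * exp (- 1)" using e0 e_facts(2) by (intro mult_left_mono) auto
      thus ?thesis by (simp add: c_def \<epsilon>_def)
    qed
    have "c / a \<le> \<sigma>" using sig_low[OF g0' g1 p2] pneg by (simp add: \<sigma>_def c_def)
    hence "1 / \<sigma> \<le> a / c" using c6 a0 e0 by (intro inv_bound) auto
    also have "\<dots> \<le> a / (\<epsilon> / 3)" using c6 a0 e0 by (intro divide_left_mono) auto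
    also have "\<dots> = 3 * a / \<epsilon>" by simp
    finally show ?thesis .
  qed
  have W0: "0 \<le> W" unfolding W_def using ww_pos[OF g0' g1] by (simp add: less_imp_le)
  have W1: "W \<le> 3 * a / real p"
  proof -
    have "W \<le> \<gamma> * exp 1 * real p powr (\<gamma> - 1)" unfolding W_def by (rule W_up[OF g0' g1 p2])
    also have "\<dots> = (\<gamma> * exp 1) * (a / real p)" using pp by (simp add: pw_m1 a_def)
    also have "\<dots> \<le> (1 * 3) * (a / real p)" using e_facts(1) g0 g1 a0 pp
      by (intro mult_right_mono mult_mono) auto
    finally show ?thesis by simp
  qed
  have P0: "0 \<le> P" unfolding P_def by (simp add: sum_nonneg)
  have P1: "P \<le> 1 / \<delta>"
  proof -
    have "P \<le> (\<Sum>j\<in>{1..p}. real j powr (- 2 * \<gamma>))" unfolding P_def by (rule P_up[OF g0' g1 p2])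
    also have "{1..p} = insert 1 {2..p}" using p2 by auto
    also have "(\<Sum>j\<in>insert 1 {2..p}. real j powr (- 2 * \<gamma>)) = 1 + (\<Sum>j\<in>{2..p}. real j powr ((1 - 2 * \<gamma>) - 1))"
      by simp
    also have "(\<Sum>j\<in>{2..p}. real j powr ((1 - 2 * \<gamma>) - 1)) \<le> 1 / (- (1 - 2 * \<gamma>))"
      using g0 by (intro psum_neg) auto
    also have "- (1 - 2 * \<gamma>) = 2 * \<delta>" by (simp add: \<delta>_def)
    also have "1 + 1 / (2 * \<delta>) \<le> 1 / \<delta>"
    proof -
      have "1 \<le> 1 / (2 * \<delta>)" using d0 by (simp add: field_simps)
      thus ?thesis by (simp add: field_simps)
    qed
    finally show ?thesis by simp
  qed
  have H0: "0 \<le> H" unfolding H_def by (simp add: sum_nonneg)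
  have H1: "H \<le> 9 / 2 * (a\<^sup>2 / real p) / \<delta>"
  proof -
    define S where "S = (\<Sum>j\<in>{2..p}. real j powr (2 * \<gamma> - 2))"
    have S0: "0 \<le> S" unfolding S_def by (simp add: sum_nonneg)
    have S1: "S \<le> (a\<^sup>2 / real p) / (2 * \<delta>)"
    proof -
      have "S \<le> (\<Sum>j\<in>{1..p}. real j powr (2 * \<gamma> - 2))" unfolding S_def by (intro sum_mono2) auto
      also have "\<dots> = (\<Sum>j\<in>{1..p}. real j powr ((2 * \<gamma> - 1) - 1))" by simp
      also have "\<dots> \<le> real p powr (2 * \<gamma> - 1) / (2 * \<gamma> - 1)" using g0 g1 by (intro psum_pos) auto
      also have "real p powr (2 * \<gamma> - 1) = a\<^sup>2 / real p" using pp a2 by (simp add: pw_m1)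
      also have "2 * \<gamma> - 1 = 2 * \<delta>" by (simp add: \<delta>_def)
      finally show ?thesis .
    qed
    have ge: "(\<gamma> * exp 1)\<^sup>2 \<le> 8"
    proof -
      have "(\<gamma> * exp 1)\<^sup>2 \<le> (1 * exp 1)\<^sup>2" using g0 g1 by (intro power_mono mult_right_mono) auto
      thus ?thesis using e_facts(3) by simp
    qed
    have "H \<le> 1 + (\<gamma> * exp 1)\<^sup>2 * S" unfolding H_def S_def by (rule H_up[OF g0' g1 p2])
    also have "\<dots> \<le> 1 + 8 * ((a\<^sup>2 / real p) / (2 * \<delta>))" using ge S0 S1 by (intro add_left_mono mult_mono) auto
    also have "\<dots> \<le> 9 / 2 * (a\<^sup>2 / real p) / \<delta>"
    proof -
      have "1 * 1 \<le> (a\<^sup>2 / real p) * (1 / (2 * \<delta>))"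
        using a2p pp d0 by (intro mult_mono) (auto simp: field_simps)
      thus ?thesis by (simp add: field_simps)
    qed
    finally show ?thesis .
  qed
  have main: "(P + real n * \<sigma>\<^sup>2) * (real k * (H + W / \<sigma>) + 2 * real k / (\<sigma>\<^sup>2 * real b)) \<le>
    400 * (real k * (a\<^sup>2 / real p) / (\<delta>\<^sup>2 * \<epsilon>) + real n * real k / real b +
           real k * a\<^sup>2 / (\<epsilon>\<^sup>2 * \<delta> * real b) + \<epsilon> * real n * real k / (\<delta> * real p))"
    unfolding \<delta>_def \<epsilon>_def
    by (rule case3_arith[OF g0 g1 pp(2) _ _ _ a0 s0 s1[unfolded \<epsilon>_def] s2[unfolded \<epsilon>_def] W0 W1 P0
          P1[unfolded \<delta>_def] H0 H1[unfolded \<delta>_def]])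
       (use k b in auto)
  define T1 where "T1 = sqrt (real k) * real p powr (\<gamma> - 1/2) / ((\<gamma> - 1/2) * sqrt (1 - \<gamma>))"
  define T2 where "T2 = sqrt (real n * real k / real b)"
  define T3 where "T3 = sqrt (real k) * real p powr \<gamma> / ((1 - \<gamma>) * sqrt ((\<gamma> - 1/2) * real b))"
  define T4 where "T4 = sqrt ((1 - \<gamma>) * real n * real k / ((\<gamma> - 1/2) * real p))"
  have bd: "bound n p k b \<gamma> = T1 + T2 + T3 + T4"
    unfolding bound_def T1_def T2_def T3_def T4_def using g0 by simp
  have T0: "0 \<le> T1" "0 \<le> T2" "0 \<le> T3" "0 \<le> T4"
    unfolding T1_def T2_def T3_def T4_def using g0 g1 by auto
  have T1s: "T1\<^sup>2 = real k * (a\<^sup>2 / real p) / (\<delta>\<^sup>2 * \<epsilon>)"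
  proof -
    have "(real p powr (\<gamma> - 1/2))\<^sup>2 = real p powr (2 * \<gamma> - 1)" using pp by (simp add: pw_sq algebra_simps)
    also have "\<dots> = a\<^sup>2 / real p" using pp a2 by (simp add: pw_m1)
    finally show ?thesis unfolding T1_def \<delta>_def \<epsilon>_def using g1
      by (simp add: power_mult_distrib power_divide)
  qed
  have T2s: "T2\<^sup>2 = real n * real k / real b" unfolding T2_def by simp
  have T3s: "T3\<^sup>2 = real k * a\<^sup>2 / (\<epsilon>\<^sup>2 * \<delta> * real b)"
    unfolding T3_def \<delta>_def \<epsilon>_def a_def using g0 by (simp add: power_mult_distrib power_divide)
  have T4s: "T4\<^sup>2 = \<epsilon> * real n * real k / (\<delta> * real p)"
    unfolding T4_def \<delta>_def \<epsilon>_def using g0 g1 by simp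
  show ?thesis unfolding bd
    by (rule fin[OF rmse_nonneg T0]) (unfold T1s T2s T3s T4s, rule order.trans[OF R main])
qed

theorem mainTheorem11:
  shows "\<exists>K::real. \<forall>(\<gamma>::real) (n::nat) (p::nat) (k::nat) (b::nat).
     0 < \<gamma> \<and> \<gamma> < 1 \<and> 2 \<le> p \<and> p \<le> n \<and> 1 \<le> k \<and> 1 \<le> b \<and> real k \<le> real n / real b \<longrightarrow>
     rmse n k b (Bmat n \<gamma> p) (Cmat n \<gamma> p) \<le> K * bound n p k b \<gamma>"
proof (intro exI[of _ 20] allI impI)
  fix \<gamma> :: real and n p k b :: nat
  assume h: "0 < \<gamma> \<and> \<gamma> < 1 \<and> 2 \<le> p \<and> p \<le> n \<and> 1 \<le> k \<and> 1 \<le> b \<and> real k \<le> real n / real b"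
  consider "\<gamma> < 1/2" | "\<gamma> = 1/2" | "1/2 < \<gamma>" by linarith
  then show "rmse n k b (Bmat n \<gamma> p) (Cmat n \<gamma> p) \<le> 20 * bound n p k b \<gamma>"
  proof cases
    case 1 then show ?thesis using h case1_main by blast
  next
    case 2 then show ?thesis using h case2_main by blast
  next
    case 3 then show ?thesis using h case3_main by blast
  qed
qed

end
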